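(* In the Bai–Hu–Shen urn model described in the context (with $Y_0\in\mathbb R_+^d\setminus\{0\}$), $\Pi_n\to p=(p^1,\dots,p^d)^t$ a.s. as $n\to\infty$; consequently $H_n\to H$ a.s. as $n\to\infty$.
   Context: Let $d\ge2$, $p^1,\dots,p^d\in(0,1)$, $e^1,\dots,e^d$ the canonical basis of $\mathbb R^d$. On a probability space, let $Y_0\in\mathbb R_+^d\setminus\{0\}$, let $(U_n)_{n\ge1}$ be i.i.d. uniform on $[0,1]$, and let $(T_n^i)_{n\ge1}$, $1\le i\le d$, be $d$ independent sequences of i.i.d. Bernoulli variables with $\mathbb P(T_n^i=1)=p^i$, independent of $(U_n)$ and $Y_0$; $T_n=(T_n^1,\dots,T_n^d)$. Set $N_0=S_0=(1,\dots,1)^t$. For $n\ge0$ define recursively $\Pi_n^i=S_n^i/N_n^i$, the matrix $D_{n+1}$ by $D_{n+1}^{jj}=T_{n+1}^j$ and $D_{n+1}^{ij}=\frac{\Pi_n^i(1-T^j_{n+1})}{\sum_{k\neq j}\Pi_n^k}$ for $i\ne j$, $X_{n+1}=\sum_{j=1}^d \mathbf 1_{\left\{\frac{\sum_{\ell<j}Y_{n}^\ell}{\sum_{\ell}Y_{n}^\ell}<U_{n+1}\le \frac{\sum_{\ell\le j}Y_{n}^\ell}{\sum_\ell Y_{n}^\ell}\right\}}e^j$, $Y_{n+1}=Y_n+D_{n+1}X_{n+1}$, $N_{n+1}=N_n+X_{n+1}$, $S_{n+1}^i=S_n^i+T_{n+1}^iX_{n+1}^i$. Let $\mathcal F_n=\sigma(Y_0,U_k,T_k,1\le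 k\le n)$ and $H_{n}=\mathbb E[D_{n}\mid\mathcal F_{n-1}]$, i.e. $H_{n+1}^{ii}=p^i$, $H_{n+1}^{ij}=\frac{\Pi_n^i(1-p^j)}{\sum_{k\ne j}\Pi_n^k}$ ($i\neq j$). Let $H$ be the matrix with $H^{ii}=p^i$ and $H^{ij}=\frac{p^i(1-p^j)}{\sum_{k\ne j}p^k}$ for $i\ne j$. *)

theory Defs
  imports "HOL-Probability.Probability"
begin

text \<open>Colours are indexed by 0,...,d-1 (the paper uses 1,...,d).
  Vectors are functions nat => real, only the entries below d matter.\<close>

definition urn_X :: "nat \<Rightarrow> (nat \<Rightarrow> real) \<Rightarrow> real \<Rightarrow> nat \<Rightarrow> real" where
  "urn_X d Y u j =
     (if (\<Sum>l<j. Y l) / (\<Sum>l<d. Y l) < u \<and> u \<le> (\<Sum>l<Suc j. Y l) / (\<Sum>l<d. Y l)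
      then 1 else 0)"

definition urn_D :: "nat \<Rightarrow> (nat \<Rightarrow> real) \<Rightarrow> (nat \<Rightarrow> real) \<Rightarrow> nat \<Rightarrow> nat \<Rightarrow> real" where
  "urn_D d Pr tt i j =
     (if i = j then tt j else Pr i * (1 - tt j) / (\<Sum>k\<in>{0..<d} - {j}. Pr k))"

text \<open>The matrix H(q): diagonal q^i, off-diagonal q^i (1-p^j) / sum_{k ~= j} q^k.
  H_{n+1} = urn_Hmat d p Pi_n and H = urn_Hmat d p p.\<close>
definition urn_Hmat :: "nat \<Rightarrow> (nat \<Rightarrow> real) \<Rightarrow> (nat \<Rightarrow> real) \<Rightarrow> nat \<Rightarrow> nat \<Rightarrow> real" where
  "urn_Hmat d p q i j =
     (if i = j then p i else q i * (1 - p j) / (\<Sum>k\<in>{0..<d} - {j}. q k))"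

text \<open>State (Y_n, N_n, S_n) of the urn along one trajectory, given Y_0 = y0,
  the uniforms u (u n = U_n) and the Bernoullis t (t n i = T_n^i).\<close>
primrec urn_state :: "nat \<Rightarrow> (nat \<Rightarrow> real) \<Rightarrow> (nat \<Rightarrow> real) \<Rightarrow> (nat \<Rightarrow> nat \<Rightarrow> real) \<Rightarrow> nat
    \<Rightarrow> (nat \<Rightarrow> real) \<times> (nat \<Rightarrow> real) \<times> (nat \<Rightarrow> real)" where
  "urn_state d y0 u t 0 = (y0, (\<lambda>_. 1), (\<lambda>_. 1))"
| "urn_state d y0 u t (Suc n) =
     (let (Y, N, S) = urn_state d y0 u t n;
          Pr = (\<lambda>i. S i / N i);
          X = urn_X d Y (u (Suc n));
          D = urn_D d Pr (t (Suc n))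
      in ((\<lambda>i. Y i + (\<Sum>j<d. D i j * X j)),
          (\<lambda>i. N i + X i),
          (\<lambda>i. S i + t (Suc n) i * X i)))"

definition urn_Pi :: "nat \<Rightarrow> (nat \<Rightarrow> real) \<Rightarrow> (nat \<Rightarrow> real) \<Rightarrow> (nat \<Rightarrow> nat \<Rightarrow> real) \<Rightarrow> nat
    \<Rightarrow> nat \<Rightarrow> real" where
  "urn_Pi d y0 u t n i =
     (case urn_state d y0 u t n of (Y, N, S) \<Rightarrow> S i / N i)"

text \<open>Index type for the independent family of inputs.\<close>
datatype urn_idx = IY | IU nat | IT nat nat

definition gen_sigma :: "'a measure \<Rightarrow> ('a \<Rightarrow> real) set \<Rightarrow> 'a set set" where
  "gen_sigma M fs = sigma_sets (space M) (\<Union>f\<in>fs. {f -` A \<inter> space M | A. A \<in> sets borel})"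

end

theory Submission
  imports Defs "HOL-Real_Asymp.Real_Asymp"
begin

definition "Yf d y0 u t n = fst (urn_state d y0 u t n)"
definition "Nf d y0 u t n = fst (snd (urn_state d y0 u t n))"
definition "Sf d y0 u t n = snd (snd (urn_state d y0 u t n))"

lemma state_Suc: "urn_state d y0 u t (Suc n) =
   ((\<lambda>i. Yf d y0 u t n i + (\<Sum>j<d. urn_D d (\<lambda>i. Sf d y0 u t n i / Nf d y0 u t n i) (t (Suc n)) i j
         * urn_X d (Yf d y0 u t n) (u (Suc n)) j)),
    (\<lambda>i. Nf d y0 u t n i + urn_X d (Yf d y0 u t n) (u (Suc n)) i),
    (\<lambda>i. Sf d y0 u t n i + t (Suc n) i * urn_X d (Yf d y0 u t n) (u (Suc n)) i))"
  by (simp add: Yf_def Nf_def Sf_def Let_def split: prod.split)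

lemma Yf_0: "Yf d y0 u t 0 = y0" and Nf_0: "Nf d y0 u t 0 i = 1" and Sf_0: "Sf d y0 u t 0 i = 1"
  by (simp_all add: Yf_def Nf_def Sf_def)

lemma Yf_Suc: "Yf d y0 u t (Suc n) i = Yf d y0 u t n i + (\<Sum>j<d. urn_D d (\<lambda>i. Sf d y0 u t n i / Nf d y0 u t n i) (t (Suc n)) i j
         * urn_X d (Yf d y0 u t n) (u (Suc n)) j)"
  by (subst Yf_def, subst state_Suc) simp

lemma Nf_Suc: "Nf d y0 u t (Suc n) i = Nf d y0 u t n i + urn_X d (Yf d y0 u t n) (u (Suc n)) i"
  by (subst Nf_def, subst state_Suc) simp

lemma Sf_Suc: "Sf d y0 u t (Suc n) i = Sf d y0 u t n i + t (Suc n) i * urn_X d (Yf d y0 u t n) (u (Suc n)) i"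
  by (subst Sf_def, subst state_Suc) simp

lemma urn_Pi_eq: "urn_Pi d y0 u t n i = Sf d y0 u t n i / Nf d y0 u t n i"
  by (simp add: urn_Pi_def Sf_def Nf_def split: prod.split)

lemma urn_X_01: "urn_X d Y x j \<in> {0,1}"
  by (simp add: urn_X_def)

locale urn_det =
  fixes d :: nat and y0 :: "nat \<Rightarrow> real" and u :: "nat \<Rightarrow> real" and t :: "nat \<Rightarrow> nat \<Rightarrow> real"
  assumes d2: "2 \<le> d"
    and t01: "\<And>n i. 1 \<le> n \<Longrightarrow> i < d \<Longrightarrow> t n i \<in> {0,1}"
    and y0nn: "\<And>j. j < d \<Longrightarrow> 0 \<le> y0 j"
    and y0nz: "\<exists>j<d. y0 j \<noteq> 0"
begin

abbreviation "Y \<equiv> Yf d y0 u t"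
abbreviation "N \<equiv> Nf d y0 u t"
abbreviation "S \<equiv> Sf d y0 u t"
abbreviation "Xs n j \<equiv> urn_X d (Y n) (u (Suc n)) j"
abbreviation "tot n \<equiv> (\<Sum>l<d. Y n l)"

lemma Xs01: "Xs n j = 0 \<or> Xs n j = 1"
  by (simp add: urn_X_def)

lemma Xs_nn: "0 \<le> Xs n j" and Xs_le1: "Xs n j \<le> 1"
  using Xs01[of n j] by auto

lemma D_nn:
  assumes "\<And>k. k < d \<Longrightarrow> 0 \<le> Pr k" "\<And>k. k < d \<Longrightarrow> tt k \<in> {0,1}" "i < d" "j < d"
  shows "0 \<le> urn_D d Pr tt i j"
proof -
  have "0 \<le> (\<Sum>k\<in>{0..<d} - {j}. Pr k)" using assms(1) by (intro sum_nonneg) auto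
  moreover have "0 \<le> 1 - tt j" "0 \<le> tt j" using assms(2)[OF assms(4)] by auto
  ultimately show ?thesis using assms(1)[OF assms(3)] by (auto simp: urn_D_def)
qed

lemma inv: "\<forall>i<d. 0 \<le> Y n i \<and> 1 \<le> S n i \<and> S n i \<le> N n i"
proof (induction n)
  case 0
  then show ?case by (simp add: Yf_0 Nf_0 Sf_0 y0nn)
next
  case (Suc n)
  show ?case
  proof (intro allI impI conjI)
    fix i assume i: "i < d"
    have Pr: "\<And>k. k < d \<Longrightarrow> 0 \<le> S n k / N n k" using Suc by force
    have tt: "\<And>k. k < d \<Longrightarrow> t (Suc n) k \<in> {0,1}" using t01 by auto
    have "0 \<le> (\<Sum>j<d. urn_D d (\<lambda>i. S n i / N n i) (t (Suc n)) i j * Xs n j)"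
      by (intro sum_nonneg mult_nonneg_nonneg D_nn[OF Pr tt i] Xs_nn) auto
    then show "0 \<le> Y (Suc n) i" using Suc i by (simp add: Yf_Suc)
    have "t (Suc n) i * Xs n i \<ge> 0" "t (Suc n) i * Xs n i \<le> Xs n i"
      using tt[OF i] Xs01[of n i] by auto
    then show "1 \<le> S (Suc n) i" "S (Suc n) i \<le> N (Suc n) i" using Suc i
      by (auto simp: Sf_Suc Nf_Suc)
  qed
qed

lemma Y_nn: "i < d \<Longrightarrow> 0 \<le> Y n i" using inv by blast
lemma S_ge1: "i < d \<Longrightarrow> 1 \<le> S n i" using inv by blast
lemma S_le_N: "i < d \<Longrightarrow> S n i \<le> N n i" using inv by blast
lemma N_ge1: "i < d \<Longrightarrow> 1 \<le> N n i" using S_ge1[of i n] S_le_N[of i n] by linarith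
lemma Pi_pos: "i < d \<Longrightarrow> 0 < S n i / N n i"
  using S_ge1 N_ge1 by (smt (verit) divide_pos_pos)
lemma Pi_le1: "i < d \<Longrightarrow> S n i / N n i \<le> 1"
proof -
  assume i: "i < d"
  have "0 < N n i" using N_ge1[OF i, where n=n] by linarith
  then show ?thesis using S_le_N[OF i] by (simp add: divide_le_eq_1)
qed
lemma Pi_ge: "i < d \<Longrightarrow> 1 / N n i \<le> S n i / N n i"
proof -
  assume i: "i < d"
  have "0 \<le> N n i" using N_ge1[OF i, where n=n] by linarith
  then show ?thesis using S_ge1[OF i] by (simp add: divide_right_mono)
qed

lemma colsum_D:
  assumes "\<And>k. k < d \<Longrightarrow> 0 < Pr k" "j < d"
  shows "(\<Sum>i<d. urn_D d Pr tt i j) = 1"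
proof -
  have jj: "{..<d} = insert j ({0..<d} - {j})" using assms(2) by auto
  have pos: "0 < (\<Sum>k\<in>{0..<d} - {j}. Pr k)"
  proof -
    obtain k where "k < d" "k \<noteq> j"
    proof (cases "j = 0")
      case True then show ?thesis using that[of 1] d2 by auto
    next
      case False then show ?thesis using that[of 0] d2 by auto
    qed
    then show ?thesis using assms(1) by (intro sum_pos2[of _ k]) (auto intro: less_imp_le)
  qed
  have "(\<Sum>i<d. urn_D d Pr tt i j) = tt j + (\<Sum>i\<in>{0..<d} - {j}. Pr i * (1 - tt j) / (\<Sum>k\<in>{0..<d} - {j}. Pr k))"
    by (subst jj, subst sum.insert) (auto simp: urn_D_def)
  also have "\<dots> = tt j + (1 - tt j) * ((\<Sum>i\<in>{0..<d} - {j}. Pr i) / (\<Sum>k\<in>{0..<d} - {j}. Pr k))"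
    by (simp only: sum_divide_distrib sum_distrib_left times_divide_eq_right mult.commute)
  also have "\<dots> = 1" using pos by simp
  finally show ?thesis .
qed

lemma tot_Suc: "tot (Suc n) = tot n + (\<Sum>j<d. Xs n j)"
proof -
  have "tot (Suc n) = tot n + (\<Sum>i<d. \<Sum>j<d. urn_D d (\<lambda>i. S n i / N n i) (t (Suc n)) i j * Xs n j)"
    by (simp add: Yf_Suc sum.distrib)
  also have "(\<Sum>i<d. \<Sum>j<d. urn_D d (\<lambda>i. S n i / N n i) (t (Suc n)) i j * Xs n j)
      = (\<Sum>j<d. (\<Sum>i<d. urn_D d (\<lambda>i. S n i / N n i) (t (Suc n)) i j) * Xs n j)"
    by (subst sum.swap) (simp add: sum_distrib_right)
  also have "\<dots> = (\<Sum>j<d. Xs n j)"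
    by (intro sum.cong refl) (simp add: colsum_D Pi_pos)
  finally show ?thesis .
qed

lemma tot0_pos: "0 < tot 0"
proof -
  obtain j where "j < d" "y0 j \<noteq> 0" using y0nz by blast
  then show ?thesis using y0nn by (intro sum_pos2[of _ j]) (auto simp: Yf_0 order_le_neq_trans)
qed

lemma tot_mono: "tot n \<le> tot (Suc n)"
  using tot_Suc[of n] by (simp add: sum_nonneg Xs_nn)

lemma tot_ge0: "tot 0 \<le> tot n"
proof (induction n)
  case (Suc n) then show ?case using tot_mono[of n] by linarith
qed simp

lemma tot_pos: "0 < tot n" using tot_ge0 tot0_pos by (meson less_le_trans)

lemma cum_mono: "j \<le> k \<Longrightarrow> k \<le> d \<Longrightarrow> (\<Sum>l<j. Y n l) \<le> (\<Sum>l<k. Y n l)"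
  by (intro sum_mono2) (auto intro: Y_nn)

lemma Xs_one_iff: "Xs n j = 1 \<longleftrightarrow>
   (\<Sum>l<j. Y n l) / tot n < u (Suc n) \<and> u (Suc n) \<le> (\<Sum>l<Suc j. Y n l) / tot n"
  by (simp add: urn_X_def)

lemma Xs_unique: "j < d \<Longrightarrow> k < d \<Longrightarrow> Xs n j = 1 \<Longrightarrow> Xs n k = 1 \<Longrightarrow> j = k"
proof (rule ccontr)
  assume a: "j < d" "k < d" "Xs n j = 1" "Xs n k = 1" "j \<noteq> k"
  have tp: "0 < tot n" by (rule tot_pos)
  { fix a b assume ab: "a < b" "b < d" "Xs n a = 1" "Xs n b = 1"
    have "(\<Sum>l<Suc a. Y n l) \<le> (\<Sum>l<b. Y n l)" using ab by (intro cum_mono) auto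
    then have "(\<Sum>l<Suc a. Y n l) / tot n \<le> (\<Sum>l<b. Y n l) / tot n" using tp by (simp add: divide_right_mono)
    moreover have "u (Suc n) \<le> (\<Sum>l<Suc a. Y n l) / tot n" using ab(3) by (simp only: Xs_one_iff)
    moreover have "(\<Sum>l<b. Y n l) / tot n < u (Suc n)" using ab(4) by (simp only: Xs_one_iff)
    ultimately have False by linarith }
  note * = this
  show False
  proof (cases "j < k")
    case True then show ?thesis using * a by blast
  next
    case False then have "k < j" using a(5) by simp
    then show ?thesis using * a by blast
  qed
qed

lemma Xs_sum_le1: "(\<Sum>j<d. Xs n j) \<le> 1"
proof (cases "\<exists>j<d. Xs n j = 1")
  case True
  then obtain j where j: "j < d" "Xs n j = 1" by blast
  have "(\<Sum>k<d. Xs n k) = (\<Sum>k<d. if k = j then 1 else 0)"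
  proof (intro sum.cong refl)
    fix k assume "k \<in> {..<d}"
    then have k: "k < d" by simp
    show "Xs n k = (if k = j then 1 else 0)"
    proof (cases "k = j")
      case True then show ?thesis using j(2) by simp
    next
      case False
      then have "Xs n k \<noteq> 1" using Xs_unique[OF j(1) k j(2)] by metis
      then show ?thesis using Xs01[of n k] False by simp
    qed
  qed
  then show ?thesis using j by simp
next
  case False
  have "(\<Sum>k<d. Xs n k) = 0"
  proof (intro sum.neutral ballI)
    fix k assume "k \<in> {..<d}"
    then show "Xs n k = 0" using False Xs01[of n k] by auto
  qed
  then show ?thesis by simp
qed

lemma tot_le: "tot n \<le> tot 0 + real n"
proof (induction n)
  case (Suc n) then show ?case using tot_Suc[of n] Xs_sum_le1[of n] by linarith
qed simp

lemma Xs_sum_eq1: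
  assumes "0 < u (Suc n)" "u (Suc n) \<le> 1"
  shows "\<exists>j<d. Xs n j = 1"
proof -
  let ?c = "\<lambda>j. (\<Sum>l<j. Y n l) / tot n"
  have tp: "0 < tot n" by (rule tot_pos)
  define A where "A = {j. j < d \<and> ?c j < u (Suc n)}"
  have "0 \<in> A" using assms d2 by (simp add: A_def)
  have fin: "finite A" by (simp add: A_def)
  define j where "j = Max A"
  have jA: "j \<in> A" using fin \<open>0 \<in> A\<close> unfolding j_def by (intro Max_in) auto
  have "u (Suc n) \<le> ?c (Suc j)"
  proof (cases "Suc j < d")
    case True
    then have "Suc j \<notin> A" using Max_ge[OF fin, of "Suc j"] unfolding j_def by linarith
    then show ?thesis using True by (auto simp: A_def)
  next
    case False
    then have "Suc j = d" using jA by (auto simp: A_def)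
    then show ?thesis using tp assms by simp
  qed
  then show ?thesis using jA by (auto simp: A_def Xs_one_iff)
qed

lemma N_Suc: "N (Suc n) i = N n i + Xs n i" by (rule Nf_Suc)

lemma N_mono: "m \<le> n \<Longrightarrow> N m i \<le> N n i"
proof (induction n)
  case (Suc n) then show ?case using N_Suc[of n i] Xs_nn[of n i] by (cases "m = Suc n") auto
qed simp

lemma Y_incr:
  assumes "i < d" "j < d" "i \<noteq> j" "Xs n j = 1" "t (Suc n) j = 0"
  shows "Y n i + (S n i / N n i) / (real d - 1) \<le> Y (Suc n) i"
proof -
  let ?Pr = "\<lambda>i. S n i / N n i"
  let ?D = "urn_D d ?Pr (t (Suc n))"
  have Pr: "\<And>k. k < d \<Longrightarrow> 0 \<le> ?Pr k" using Pi_pos by (simp add: less_imp_le)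
  have tt: "\<And>k. k < d \<Longrightarrow> t (Suc n) k \<in> {0,1}" using t01 by auto
  have pos: "0 < (\<Sum>k\<in>{0..<d} - {j}. ?Pr k)"
    using assms Pi_pos by (intro sum_pos2[of _ i]) (auto intro: less_imp_le)
  have le: "(\<Sum>k\<in>{0..<d} - {j}. ?Pr k) \<le> real d - 1"
  proof -
    have "(\<Sum>k\<in>{0..<d} - {j}. ?Pr k) \<le> (\<Sum>k\<in>{0..<d} - {j}. 1)"
      using Pi_le1 by (intro sum_mono) auto
    also have "\<dots> = real d - 1" using assms(2) by (simp add: card_Diff_singleton of_nat_diff)
    finally show ?thesis .
  qed
  have "?Pr i / (real d - 1) \<le> ?Pr i / (\<Sum>k\<in>{0..<d} - {j}. ?Pr k)"
    using pos le Pr[OF assms(1)] by (intro divide_left_mono) auto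
  also have "\<dots> = ?D i j * Xs n j" using assms by (simp add: urn_D_def)
  also have "\<dots> \<le> (\<Sum>k<d. ?D i k * Xs n k)"
    using assms D_nn[OF Pr tt] Xs_nn by (intro member_le_sum) (auto intro: mult_nonneg_nonneg)
  finally show ?thesis by (simp add: Yf_Suc)
qed

lemma Y_mono1: "i < d \<Longrightarrow> Y n i \<le> Y (Suc n) i"
proof -
  assume i: "i < d"
  have Pr: "\<And>k. k < d \<Longrightarrow> 0 \<le> S n k / N n k" using Pi_pos by (simp add: less_imp_le)
  have tt: "\<And>k. k < d \<Longrightarrow> t (Suc n) k \<in> {0,1}" using t01 by auto
  have "0 \<le> (\<Sum>j<d. urn_D d (\<lambda>i. S n i / N n i) (t (Suc n)) i j * Xs n j)"
    by (intro sum_nonneg mult_nonneg_nonneg D_nn[OF Pr tt i] Xs_nn) auto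
  then show ?thesis by (simp add: Yf_Suc)
qed

lemma Y_mono: "i < d \<Longrightarrow> m \<le> n \<Longrightarrow> Y m i \<le> Y n i"
proof (induction n)
  case (Suc n) then show ?case using Y_mono1[of i n] by (cases "m = Suc n") auto
qed simp

end


definition indep_past :: "'a measure \<Rightarrow> 'a measure \<Rightarrow> ('a \<Rightarrow> real) \<Rightarrow> bool" where
  "indep_past M Mg V \<longleftrightarrow> V \<in> borel_measurable M \<and> sets Mg \<subseteq> sets M \<and> space Mg = space M \<and>
     (\<forall>a\<in>sets Mg. \<forall>B\<in>sets (borel :: real measure).
        measure M (a \<inter> (V -` B \<inter> space M)) = measure M a * measure M (V -` B \<inter> space M))"

lemma indep_integral:
  assumes P: "prob_space M"
    and ind: "indep_past M Mg V"
    and h: "h \<in> borel_measurable (Mg \<Otimes>\<^sub>M (borel :: real measure))"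
  shows "(\<integral>\<^sup>+\<omega>. h (\<omega>, V \<omega>) \<partial>M) = (\<integral>\<^sup>+\<omega>. (\<integral>\<^sup>+v. h (\<omega>, v) \<partial>distr M borel V) \<partial>M)"
proof -
  interpret prob_space M by fact
  have rv2: "V \<in> borel_measurable M" and Mg: "sets Mg \<subseteq> sets M" "space Mg = space M"
    using ind by (auto simp: indep_past_def)
  have rv1: "(\<lambda>x. x) \<in> measurable M Mg"
    using Mg by (intro measurableI) (auto simp: subset_iff)
  interpret pV: prob_space "distr M borel V" by (rule prob_space_distr[OF rv2])
  interpret pG: prob_space "distr M Mg (\<lambda>x. x)" by (rule prob_space_distr[OF rv1])
  have pair: "(\<lambda>x. (x, V x)) \<in> measurable M (Mg \<Otimes>\<^sub>M borel)"
    using rv1 rv2 by (intro measurable_Pair) auto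
  have eq: "distr M Mg (\<lambda>x. x) \<Otimes>\<^sub>M distr M borel V = distr M (Mg \<Otimes>\<^sub>M borel) (\<lambda>x. (x, V x))"
  proof (rule pair_measure_eqI)
    show "sigma_finite_measure (distr M Mg (\<lambda>x. x))" "sigma_finite_measure (distr M borel V)"
      by unfold_locales
    show "sets (distr M Mg (\<lambda>x. x) \<Otimes>\<^sub>M distr M borel V) = sets (distr M (Mg \<Otimes>\<^sub>M borel) (\<lambda>x. (x, V x)))"
      by (subst sets_distr) (rule sets_pair_measure_cong; simp)
  next
    fix A B assume A: "A \<in> sets (distr M Mg (\<lambda>x. x))" and B: "B \<in> sets (distr M borel V)"
    then have A': "A \<in> sets Mg" and B': "B \<in> sets (borel :: real measure)" by auto
    have AM: "A \<in> events" using A' Mg by auto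
    then have Asp: "A \<subseteq> space M" using sets.sets_into_space by blast
    have VB: "V -` B \<inter> space M \<in> events" using rv2 B' by measurable
    have "emeasure (distr M (Mg \<Otimes>\<^sub>M borel) (\<lambda>x. (x, V x))) (A \<times> B) = emeasure M (A \<inter> (V -` B \<inter> space M))"
      using A' B' pair by (subst emeasure_distr) (auto intro!: arg_cong[where f="emeasure M"])
    also have "\<dots> = ennreal (measure M A * measure M (V -` B \<inter> space M))"
      using ind A' B' by (simp add: indep_past_def emeasure_eq_measure)
    also have "\<dots> = emeasure (distr M Mg (\<lambda>x. x)) A * emeasure (distr M borel V) B"
      using A' B' AM VB rv1 rv2 Asp
      by (simp add: emeasure_distr emeasure_eq_measure ennreal_mult Int_absorb2 Mg)
    finally show "emeasure (distr M Mg (\<lambda>x. x)) A * emeasure (distr M borel V) B =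
        emeasure (distr M (Mg \<Otimes>\<^sub>M borel) (\<lambda>x. (x, V x))) (A \<times> B)" by simp
  qed
  have sets_eq: "sets (distr M Mg (\<lambda>x. x) \<Otimes>\<^sub>M distr M borel V) = sets (Mg \<Otimes>\<^sub>M borel)"
    by (intro sets_pair_measure_cong) auto
  have h': "h \<in> borel_measurable (distr M Mg (\<lambda>x. x) \<Otimes>\<^sub>M distr M borel V)"
    using h by (simp add: measurable_cong_sets[OF sets_eq refl])
  have "(\<integral>\<^sup>+\<omega>. h (\<omega>, V \<omega>) \<partial>M) = integral\<^sup>N (distr M (Mg \<Otimes>\<^sub>M borel) (\<lambda>x. (x, V x))) h"
    using pair h by (subst nn_integral_distr) auto
  also have "\<dots> = integral\<^sup>N (distr M Mg (\<lambda>x. x) \<Otimes>\<^sub>M distr M borel V) h" by (simp add: eq)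
  also have "\<dots> = (\<integral>\<^sup>+ x. \<integral>\<^sup>+ y. h (x, y) \<partial>distr M borel V \<partial>distr M Mg (\<lambda>x. x))"
    by (rule pV.nn_integral_fst[symmetric, OF h'])
  also have "\<dots> = (\<integral>\<^sup>+\<omega>. (\<integral>\<^sup>+v. h (\<omega>, v) \<partial>distr M borel V) \<partial>M)"
  proof (subst nn_integral_distr[OF rv1])
    have "(\<lambda>x. \<integral>\<^sup>+ y. h (x, y) \<partial>distr M borel V) \<in> borel_measurable Mg"
      using h by (intro pV.borel_measurable_nn_integral_fst) (simp add: measurable_cong_sets[OF sets_pair_measure_cong[OF refl sets_distr]])
    then show "(\<lambda>x. \<integral>\<^sup>+ y. h (x, y) \<partial>distr M borel V) \<in> borel_measurable (distr M Mg (\<lambda>x. x))"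
      by simp
  qed simp
  finally show ?thesis .
qed

lemma meas_in_sigma:
  assumes "{f -` A \<inter> space M | A. A \<in> sets (borel :: real measure)} \<subseteq> G" "G \<subseteq> Pow (space M)"
  shows "f \<in> borel_measurable (sigma (space M) G)"
proof (rule measurableI)
  fix A :: "real set" assume "A \<in> sets borel"
  then have "f -` A \<inter> space M \<in> G" using assms(1) by blast
  then show "f -` A \<inter> space (sigma (space M) G) \<in> sets (sigma (space M) G)"
    using assms(2) by (simp add: sets_measure_of_conv space_measure_of_conv)
qed simp

lemma gen_sigma_sub: "f \<in> fs \<Longrightarrow> {f -` A \<inter> space M | A. A \<in> sets (borel :: real measure)} \<subseteq> gen_sigma M fs"
  unfolding gen_sigma_def by (auto intro!: sigma_sets.Basic)

lemma gen_sigma_Pow: "gen_sigma M fs \<subseteq> Pow (space M)"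
  unfolding gen_sigma_def by (auto dest: sigma_sets_into_sp[rotated])

lemma gen_sigma_Int_stable: "Int_stable (gen_sigma M fs)"
proof -
  have "sigma_algebra (space M) (gen_sigma M fs)" unfolding gen_sigma_def
    by (intro sigma_algebra_sigma_sets) auto
  then interpret sigma_algebra "space M" "gen_sigma M fs" .
  show ?thesis by (rule Int_stable)
qed


lemma measurable_sub:
  assumes "sets Mg \<subseteq> sets M" "space Mg = space M" "f \<in> measurable Mg N"
  shows "f \<in> measurable M N"
  using assms by (auto simp: measurable_def)

lemma sigma_sub:
  assumes "G \<subseteq> sets M"
  shows "sets (sigma (space M) G) \<subseteq> sets M" "space (sigma (space M) G) = space M"
proof -
  have G: "G \<subseteq> Pow (space M)" using assms sets.sets_into_space by blast
  show "space (sigma (space M) G) = space M" using G by (simp add: space_measure_of_conv)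
  show "sets (sigma (space M) G) \<subseteq> sets M" using G assms
    by (simp add: sets_measure_of_conv sets.sigma_sets_subset)
qed

lemma indep_var_split:
  assumes P: "prob_space M"
    and ind: "prob_space.indep_sets M F I"
    and st: "\<And>i. i \<in> I \<Longrightarrow> Int_stable (F i)"
    and AB: "A \<subseteq> I" "B \<subseteq> I" "A \<inter> B = {}"
    and V: "V \<in> borel_measurable (sigma (space M) (\<Union>i\<in>B. F i))"
  shows "indep_past M (sigma (space M) (\<Union>i\<in>A. F i)) V"
proof -
  interpret prob_space M by fact
  have Fev: "\<And>i. i \<in> I \<Longrightarrow> F i \<subseteq> events" using ind unfolding indep_sets_def by blast
  have FA: "(\<Union>i\<in>A. F i) \<subseteq> events" and FB: "(\<Union>i\<in>B. F i) \<subseteq> events" using Fev AB by blast+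
  have FAp: "(\<Union>i\<in>A. F i) \<subseteq> Pow (space M)" and FBp: "(\<Union>i\<in>B. F i) \<subseteq> Pow (space M)"
    using FA FB sets.sets_into_space by blast+
  let ?SA = "sigma_sets (space M) (\<Union>i\<in>A. F i)"
  let ?SB = "sigma_sets (space M) (\<Union>i\<in>B. F i)"
  have un: "(\<Union>j\<in>UNIV. case_bool A B j) = A \<union> B" by (auto split: bool.splits)
  have "indep_sets (\<lambda>j. sigma_sets (space M) (\<Union>i\<in>case_bool A B j. F i)) UNIV"
  proof (rule indep_sets_collect_sigma)
    show "indep_sets F (\<Union>j\<in>UNIV. case_bool A B j)"
      unfolding un using AB by (intro indep_sets_mono_index[OF _ ind]) auto
    show "\<And>i j. j \<in> UNIV \<Longrightarrow> i \<in> case_bool A B j \<Longrightarrow> Int_stable (F i)"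
      using st AB by (auto split: bool.splits)
    show "disjoint_family_on (case_bool A B) UNIV"
      using AB(3) unfolding disjoint_family_on_def by (auto split: bool.splits)
  qed
  moreover have "(\<lambda>j. sigma_sets (space M) (\<Union>i\<in>case_bool A B j. F i)) = case_bool ?SA ?SB"
    by (rule ext) (auto split: bool.splits)
  ultimately have iAB: "indep_set ?SA ?SB" by (simp add: indep_set_def)
  have sA: "sets (sigma (space M) (\<Union>i\<in>A. F i)) = ?SA" using FAp by (simp add: sets_measure_of_conv)
  have spA: "space (sigma (space M) (\<Union>i\<in>A. F i)) = space M" using FAp by (simp add: space_measure_of_conv)
  have spB: "space (sigma (space M) (\<Union>i\<in>B. F i)) = space M" using FBp by (simp add: space_measure_of_conv)
  have sB: "sets (sigma (space M) (\<Union>i\<in>B. F i)) = ?SB" using FBp by (simp add: sets_measure_of_conv)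
  have rv2: "V \<in> borel_measurable M"
    using measurable_sub[OF sigma_sub[OF FB] V] .
  show ?thesis unfolding indep_past_def
  proof (intro conjI ballI rv2 sigma_sub[OF FA])
    fix a and X :: "real set" assume a: "a \<in> sets (sigma (space M) (\<Union>i\<in>A. F i))" and X: "X \<in> sets borel"
    have "V -` X \<inter> space (sigma (space M) (\<Union>i\<in>B. F i)) \<in> sets (sigma (space M) (\<Union>i\<in>B. F i))"
      using V X by (rule measurable_sets)
    then have "V -` X \<inter> space M \<in> ?SB" using sB spB by simp
    moreover have "a \<in> ?SA" using a sA by simp
    ultimately show "measure M (a \<inter> (V -` X \<inter> space M)) = measure M a * measure M (V -` X \<inter> space M)"
      using iAB by (simp add: indep_sets2_eq)
  qed
qed

lemma exp_sum_le1:
  fixes Mg :: "nat \<Rightarrow> 'a measure" and V :: "nat \<Rightarrow> 'a \<Rightarrow> real" and \<phi> :: "nat \<Rightarrow> 'a \<times> real \<Rightarrow> real"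
  assumes P: "prob_space M"
    and ind: "\<And>m. 1 \<le> m \<Longrightarrow> indep_past M (Mg m) (V m)"
    and \<phi>m: "\<And>m. 1 \<le> m \<Longrightarrow> \<phi> m \<in> borel_measurable (Mg m \<Otimes>\<^sub>M borel)"
    and bd: "\<And>m \<omega>. 1 \<le> m \<Longrightarrow> \<omega> \<in> space M \<Longrightarrow> (\<integral>\<^sup>+v. ennreal (exp (\<phi> m (\<omega>, v))) \<partial>distr M borel (V m)) \<le> 1"
    and past: "\<And>m. 1 \<le> m \<Longrightarrow> (\<lambda>\<omega>. \<Sum>k\<in>{1..<m}. \<phi> k (\<omega>, V k \<omega>)) \<in> borel_measurable (Mg m)"
  shows "(\<integral>\<^sup>+\<omega>. ennreal (exp (\<Sum>k\<in>{1..n}. \<phi> k (\<omega>, V k \<omega>))) \<partial>M) \<le> 1"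
proof (induction n)
  case 0
  interpret prob_space M by fact
  show ?case by (simp add: emeasure_space_1)
next
  case (Suc n)
  interpret prob_space M by fact
  define m where "m = Suc n"
  have m1: "1 \<le> m" by (simp add: m_def)
  let ?P = "\<lambda>\<omega>. \<Sum>k\<in>{1..<m}. \<phi> k (\<omega>, V k \<omega>)"
  have rv2: "V m \<in> borel_measurable M" and Mg: "space (Mg m) = space M" using ind[OF m1] by (auto simp: indep_past_def)
  interpret pV: prob_space "distr M borel (V m)" by (rule prob_space_distr[OF rv2])
  define h where "h = (\<lambda>(\<omega>, v). ennreal (exp (?P \<omega>)) * ennreal (exp (\<phi> m (\<omega>, v))))"
  have hm: "h \<in> borel_measurable (Mg m \<Otimes>\<^sub>M borel)"
    unfolding h_def using past[OF m1] \<phi>m[OF m1] by measurable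
  have eq: "\<And>\<omega>. ennreal (exp (\<Sum>k\<in>{1..Suc n}. \<phi> k (\<omega>, V k \<omega>))) = h (\<omega>, V m \<omega>)"
  proof -
    fix \<omega>
    have "{1..Suc n} = insert m {1..<m}" by (auto simp: m_def)
    then show "ennreal (exp (\<Sum>k\<in>{1..Suc n}. \<phi> k (\<omega>, V k \<omega>))) = h (\<omega>, V m \<omega>)"
      by (simp add: h_def exp_add ennreal_mult' mult.commute)
  qed
  have "(\<integral>\<^sup>+\<omega>. ennreal (exp (\<Sum>k\<in>{1..Suc n}. \<phi> k (\<omega>, V k \<omega>))) \<partial>M) = (\<integral>\<^sup>+\<omega>. h (\<omega>, V m \<omega>) \<partial>M)"
    by (intro nn_integral_cong) (simp only: eq)
  also have "\<dots> = (\<integral>\<^sup>+\<omega>. (\<integral>\<^sup>+v. h (\<omega>, v) \<partial>distr M borel (V m)) \<partial>M)"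
    by (rule indep_integral[OF P ind[OF m1] hm])
  also have "\<dots> \<le> (\<integral>\<^sup>+\<omega>. ennreal (exp (?P \<omega>)) \<partial>M)"
  proof (rule nn_integral_mono)
    fix \<omega> assume \<omega>: "\<omega> \<in> space M"
    have "(\<integral>\<^sup>+v. h (\<omega>, v) \<partial>distr M borel (V m)) = ennreal (exp (?P \<omega>)) * (\<integral>\<^sup>+v. ennreal (exp (\<phi> m (\<omega>, v))) \<partial>distr M borel (V m))"
    proof -
      have "\<omega> \<in> space (Mg m)" using \<omega> Mg by simp
      then have "(\<lambda>v. \<phi> m (\<omega>, v)) \<in> borel_measurable borel"
        using measurable_Pair2[OF \<phi>m[OF m1]] by simp
      then have "(\<lambda>v. ennreal (exp (\<phi> m (\<omega>, v)))) \<in> borel_measurable (distr M borel (V m))"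
        by simp
      then show ?thesis unfolding h_def by (simp add: nn_integral_cmult)
    qed
    also have "\<dots> \<le> ennreal (exp (?P \<omega>)) * 1" using bd[OF m1 \<omega>] by (intro mult_left_mono) auto
    finally show "(\<integral>\<^sup>+v. h (\<omega>, v) \<partial>distr M borel (V m)) \<le> ennreal (exp (?P \<omega>))" by simp
  qed
  also have "\<dots> \<le> 1"
  proof -
    have "{1..<m} = {1..n}" by (auto simp: m_def)
    then show ?thesis using Suc.IH by simp
  qed
  finally show ?case .
qed


lemma markov_exp:
  assumes P: "prob_space M" and f: "f \<in> borel_measurable M"
    and E: "(\<integral>\<^sup>+\<omega>. ennreal (exp (f \<omega>)) \<partial>M) \<le> 1"
  shows "measure M {\<omega>\<in>space M. a \<le> f \<omega>} \<le> exp (- a)"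
proof -
  interpret prob_space M by fact
  let ?E = "{\<omega>\<in>space M. a \<le> f \<omega>}"
  have Em: "?E \<in> events" using f by measurable
  have "ennreal (exp a * measure M ?E) = (\<integral>\<^sup>+\<omega>. ennreal (exp a) * indicator ?E \<omega> \<partial>M)"
    using Em by (simp add: nn_integral_cmult_indicator emeasure_eq_measure ennreal_mult)
  also have "\<dots> \<le> (\<integral>\<^sup>+\<omega>. ennreal (exp (f \<omega>)) \<partial>M)"
    by (intro nn_integral_mono) (auto split: split_indicator)
  also have "\<dots> \<le> 1" by (rule E)
  finally have "exp a * measure M ?E \<le> 1"
    by (simp add: ennreal_le_1)
  then show ?thesis by (simp add: exp_minus field_simps)
qed

lemma sum_diverge:
  fixes A \<rho> :: "nat \<Rightarrow> 'a \<Rightarrow> real"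
  assumes P: "prob_space M"
    and Am[measurable]: "\<And>m. A m \<in> borel_measurable M" 
    and \<rho>m[measurable]: "\<And>m. \<rho> m \<in> borel_measurable M" and \<rho>nn: "\<And>m \<omega>. \<omega> \<in> space M \<Longrightarrow> 0 \<le> \<rho> m \<omega>"
    and c: "0 < c"
    and E: "\<And>n. (\<integral>\<^sup>+\<omega>. ennreal (exp (\<Sum>k\<in>{1..n}. c * \<rho> k \<omega> - A k \<omega>)) \<partial>M) \<le> 1"
  shows "AE \<omega> in M. (\<forall>R. \<exists>n. R \<le> (\<Sum>k\<in>{1..n}. \<rho> k \<omega>)) \<longrightarrow> (\<forall>K. \<exists>n. K < (\<Sum>k\<in>{1..n}. A k \<omega>))"
proof -
  interpret prob_space M by fact
  define E' where "E' K R n = {\<omega>\<in>space M. real R \<le> (\<Sum>k\<in>{1..n}. \<rho> k \<omega>) \<and> (\<forall>n'. (\<Sum>k\<in>{1..n'}. A k \<omega>) \<le> real K)}"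
    for K R n :: nat
  have E'm[measurable]: "E' K R n \<in> events" for K R n unfolding E'_def by measurable
  have mE': "measure M (E' K R n) \<le> exp (real K - c * real R)" for K R n
  proof -
    have "measure M (E' K R n) \<le> measure M {\<omega>\<in>space M. c * real R - real K \<le> (\<Sum>k\<in>{1..n}. c * \<rho> k \<omega> - A k \<omega>)}"
    proof (rule finite_measure_mono)
      show "E' K R n \<subseteq> {\<omega>\<in>space M. c * real R - real K \<le> (\<Sum>k\<in>{1..n}. c * \<rho> k \<omega> - A k \<omega>)}"
      proof safe
        fix \<omega> assume "\<omega> \<in> E' K R n"
        then have \<omega>: "\<omega> \<in> space M" "real R \<le> (\<Sum>k\<in>{1..n}. \<rho> k \<omega>)" "(\<Sum>k\<in>{1..n}. A k \<omega>) \<le> real K"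
          unfolding E'_def by auto
        have "c * real R \<le> c * (\<Sum>k\<in>{1..n}. \<rho> k \<omega>)" using \<omega>(2) c by simp
        then show "c * real R - real K \<le> (\<Sum>k\<in>{1..n}. c * \<rho> k \<omega> - A k \<omega>)"
          using \<omega>(3) by (simp add: sum_subtractf sum_distrib_left)
      qed (simp add: E'_def)
    qed measurable
    also have "\<dots> \<le> exp (- (c * real R - real K))"
      by (rule markov_exp[OF P _ E]) measurable
    finally show ?thesis by simp
  qed
  have inc: "incseq (E' K R)" for K R
  proof (rule incseq_SucI)
    fix n
    show "E' K R n \<subseteq> E' K R (Suc n)"
      unfolding E'_def using \<rho>nn by (auto simp: add_increasing2)
  qed
  have mU: "measure M (\<Union>n. E' K R n) \<le> exp (real K - c * real R)" for K R
  proof -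
    have "(\<lambda>n. measure M (E' K R n)) \<longlonglongrightarrow> measure M (\<Union>n. E' K R n)"
      using inc by (intro finite_Lim_measure_incseq) auto
    then show ?thesis using mE' by (intro LIMSEQ_le_const2) auto
  qed
  define Z where "Z K = (\<Inter>R. \<Union>n. E' K R n)" for K
  have Zm[measurable]: "Z K \<in> events" for K unfolding Z_def by measurable
  have Z0: "Z K \<in> null_sets M" for K
  proof -
    have le: "measure M (Z K) \<le> exp (real K - c * real R)" for R
    proof -
      have "Z K \<subseteq> (\<Union>n. E' K R n)" unfolding Z_def by blast
      moreover have "(\<Union>n. E' K R n) \<in> events" by measurable
      ultimately have "measure M (Z K) \<le> measure M (\<Union>n. E' K R n)" by (rule finite_measure_mono)
      then show ?thesis using mU[of K R] by linarith
    qed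
    have lim: "(\<lambda>R. exp (real K - c * real R)) \<longlonglongrightarrow> 0" using c by real_asymp
    have "measure M (Z K) \<le> 0" using lim le by (intro LIMSEQ_le_const) auto
    then have "measure M (Z K) = 0" using measure_nonneg[of M "Z K"] by linarith
    then show ?thesis using Zm by (simp add: null_sets_def emeasure_eq_measure)
  qed
  show ?thesis
  proof (rule AE_I')
    show "(\<Union>K. Z K) \<in> null_sets M" using Z0 by (intro null_sets_UN) auto
    show "{\<omega>\<in>space M. \<not> ((\<forall>R. \<exists>n. R \<le> (\<Sum>k\<in>{1..n}. \<rho> k \<omega>)) \<longrightarrow> (\<forall>K. \<exists>n. K < (\<Sum>k\<in>{1..n}. A k \<omega>)))} \<subseteq> (\<Union>K. Z K)"
    proof (intro subsetI)
      fix \<omega> assume "\<omega> \<in> {\<omega>\<in>space M. \<not> ((\<forall>R. \<exists>n. R \<le> (\<Sum>k\<in>{1..n}. \<rho> k \<omega>)) \<longrightarrow> (\<forall>K. \<exists>n. K < (\<Sum>k\<in>{1..n}. A k \<omega>)))}"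
      then obtain K where \<omega>: "\<omega> \<in> space M" "\<forall>R. \<exists>n. R \<le> (\<Sum>k\<in>{1..n}. \<rho> k \<omega>)" "\<forall>n. \<not> K < (\<Sum>k\<in>{1..n}. A k \<omega>)"
        by blast
      obtain K' :: nat where K': "K \<le> real K'" using real_arch_simple by blast
      have "\<omega> \<in> Z K'" unfolding Z_def
      proof
        fix R
        obtain n where "real R \<le> (\<Sum>k\<in>{1..n}. \<rho> k \<omega>)" using \<omega>(2) by blast
        then have "\<omega> \<in> E' K' R n" using \<omega>(1,3) K' unfolding E'_def by (auto simp: not_less intro: order_trans)
        then show "\<omega> \<in> (\<Union>n. E' K' R n)" by blast
      qed
      then show "\<omega> \<in> (\<Union>K. Z K)" by blast
    qed
  qed
qed


lemma urn_X_meas: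
  assumes Y: "\<And>l. l < d \<Longrightarrow> (\<lambda>\<omega>. Y \<omega> l) \<in> borel_measurable Mg" and u: "u \<in> borel_measurable Mg" and j: "j < d"
  shows "(\<lambda>\<omega>. urn_X d (Y \<omega>) (u \<omega>) j) \<in> borel_measurable Mg"
proof -
  have s1[measurable]: "(\<lambda>\<omega>. \<Sum>l<j. Y \<omega> l) \<in> borel_measurable Mg"
    using Y j by (intro borel_measurable_sum) auto
  have s2[measurable]: "(\<lambda>\<omega>. \<Sum>l<Suc j. Y \<omega> l) \<in> borel_measurable Mg"
    using Y j by (intro borel_measurable_sum) auto
  have s3[measurable]: "(\<lambda>\<omega>. \<Sum>l<d. Y \<omega> l) \<in> borel_measurable Mg"
    using Y by (intro borel_measurable_sum) auto
  note u[measurable]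
  show ?thesis unfolding urn_X_def by measurable
qed

lemma urn_D_meas:
  assumes Pr: "\<And>l. l < d \<Longrightarrow> (\<lambda>\<omega>. Pr \<omega> l) \<in> borel_measurable Mg"
    and tt: "\<And>l. l < d \<Longrightarrow> (\<lambda>\<omega>. tt \<omega> l) \<in> borel_measurable Mg" and i: "i < d" and j: "j < d"
  shows "(\<lambda>\<omega>. urn_D d (Pr \<omega>) (tt \<omega>) i j) \<in> borel_measurable Mg"
proof -
  have s[measurable]: "(\<lambda>\<omega>. \<Sum>k\<in>{0..<d} - {j}. Pr \<omega> k) \<in> borel_measurable Mg"
    using Pr by (intro borel_measurable_sum) auto
  note Pr[OF i, measurable] tt[OF j, measurable]
  show ?thesis unfolding urn_D_def by measurable
qed

lemma urn_meas:
  fixes Mg :: "'a measure" and Y0 U :: "nat \<Rightarrow> 'a \<Rightarrow> real" and T :: "nat \<Rightarrow> nat \<Rightarrow> 'a \<Rightarrow> real"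
  assumes Y0: "\<And>j. j < d \<Longrightarrow> Y0 j \<in> borel_measurable Mg"
    and U: "\<And>k. 1 \<le> k \<Longrightarrow> k \<le> n \<Longrightarrow> U k \<in> borel_measurable Mg"
    and T: "\<And>k i. 1 \<le> k \<Longrightarrow> k \<le> n \<Longrightarrow> i < d \<Longrightarrow> T k i \<in> borel_measurable Mg"
  shows "\<forall>i<d. (\<lambda>\<omega>. Yf d (\<lambda>j. Y0 j \<omega>) (\<lambda>n. U n \<omega>) (\<lambda>n i. T n i \<omega>) n i) \<in> borel_measurable Mg
            \<and> (\<lambda>\<omega>. Nf d (\<lambda>j. Y0 j \<omega>) (\<lambda>n. U n \<omega>) (\<lambda>n i. T n i \<omega>) n i) \<in> borel_measurable Mg
            \<and> (\<lambda>\<omega>. Sf d (\<lambda>j. Y0 j \<omega>) (\<lambda>n. U n \<omega>) (\<lambda>n i. T n i \<omega>) n i) \<in> borel_measurable Mg"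
  using U T
proof (induction n)
  case 0
  then show ?case using Y0 by (simp add: Yf_0 Nf_0 Sf_0)
next
  case (Suc n)
  let ?Y = "\<lambda>\<omega>. Yf d (\<lambda>j. Y0 j \<omega>) (\<lambda>n. U n \<omega>) (\<lambda>n i. T n i \<omega>) n"
  let ?N = "\<lambda>\<omega>. Nf d (\<lambda>j. Y0 j \<omega>) (\<lambda>n. U n \<omega>) (\<lambda>n i. T n i \<omega>) n"
  let ?S = "\<lambda>\<omega>. Sf d (\<lambda>j. Y0 j \<omega>) (\<lambda>n. U n \<omega>) (\<lambda>n i. T n i \<omega>) n"
  have IH: "\<forall>i<d. (\<lambda>\<omega>. ?Y \<omega> i) \<in> borel_measurable Mg \<and> (\<lambda>\<omega>. ?N \<omega> i) \<in> borel_measurable Mg \<and> (\<lambda>\<omega>. ?S \<omega> i) \<in> borel_measurable Mg"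
    using Suc by auto
  have Uk: "U (Suc n) \<in> borel_measurable Mg" using Suc.prems by auto
  have Tk: "\<And>i. i < d \<Longrightarrow> (\<lambda>\<omega>. T (Suc n) i \<omega>) \<in> borel_measurable Mg" using Suc.prems by auto
  have X: "\<And>j. j < d \<Longrightarrow> (\<lambda>\<omega>. urn_X d (?Y \<omega>) (U (Suc n) \<omega>) j) \<in> borel_measurable Mg"
    using IH Uk by (intro urn_X_meas) auto
  have Pr: "\<And>l. l < d \<Longrightarrow> (\<lambda>\<omega>. (\<lambda>i. ?S \<omega> i / ?N \<omega> i) l) \<in> borel_measurable Mg"
    using IH by auto
  have D: "\<And>i j. i < d \<Longrightarrow> j < d \<Longrightarrow> (\<lambda>\<omega>. urn_D d (\<lambda>i. ?S \<omega> i / ?N \<omega> i) (\<lambda>i. T (Suc n) i \<omega>) i j) \<in> borel_measurable Mg"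
    by (rule urn_D_meas[OF Pr Tk])
  show ?case
  proof (intro allI impI conjI)
    fix i assume i: "i < d"
    have "(\<lambda>\<omega>. ?Y \<omega> i + (\<Sum>j<d. urn_D d (\<lambda>i. ?S \<omega> i / ?N \<omega> i) (\<lambda>i. T (Suc n) i \<omega>) i j * urn_X d (?Y \<omega>) (U (Suc n) \<omega>) j)) \<in> borel_measurable Mg"
      using IH i D X by (intro borel_measurable_add borel_measurable_sum borel_measurable_times) auto
    then show "(\<lambda>\<omega>. Yf d (\<lambda>j. Y0 j \<omega>) (\<lambda>n. U n \<omega>) (\<lambda>n i. T n i \<omega>) (Suc n) i) \<in> borel_measurable Mg"
      by (simp add: Yf_Suc)
    have "(\<lambda>\<omega>. ?N \<omega> i + urn_X d (?Y \<omega>) (U (Suc n) \<omega>) i) \<in> borel_measurable Mg"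
      using IH i X by (intro borel_measurable_add) auto
    then show "(\<lambda>\<omega>. Nf d (\<lambda>j. Y0 j \<omega>) (\<lambda>n. U n \<omega>) (\<lambda>n i. T n i \<omega>) (Suc n) i) \<in> borel_measurable Mg"
      by (simp add: Nf_Suc)
    have "(\<lambda>\<omega>. ?S \<omega> i + T (Suc n) i \<omega> * urn_X d (?Y \<omega>) (U (Suc n) \<omega>) i) \<in> borel_measurable Mg"
      using IH i X Tk by (intro borel_measurable_add borel_measurable_times) auto
    then show "(\<lambda>\<omega>. Sf d (\<lambda>j. Y0 j \<omega>) (\<lambda>n. U n \<omega>) (\<lambda>n i. T n i \<omega>) (Suc n) i) \<in> borel_measurable Mg"
      by (simp add: Sf_Suc)
  qed
qed


locale urn_prob =
  fixes M :: "'a measure" and d :: nat and p :: "nat \<Rightarrow> real"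
    and Y0 :: "nat \<Rightarrow> 'a \<Rightarrow> real" and U :: "nat \<Rightarrow> 'a \<Rightarrow> real"
    and T :: "nat \<Rightarrow> nat \<Rightarrow> 'a \<Rightarrow> real"
  assumes PS: "prob_space M"
    and d2: "d \<ge> 2"
    and p01: "\<And>i. i < d \<Longrightarrow> 0 < p i \<and> p i < 1"
    and Y0m: "\<And>j. j < d \<Longrightarrow> Y0 j \<in> borel_measurable M"
    and Y0pos: "\<And>\<omega>. \<omega> \<in> space M \<Longrightarrow> (\<forall>j<d. 0 \<le> Y0 j \<omega>) \<and> (\<exists>j<d. Y0 j \<omega> \<noteq> 0)"
    and Um: "\<And>n. n \<ge> 1 \<Longrightarrow> U n \<in> borel_measurable M"
    and Udist: "\<And>n. n \<ge> 1 \<Longrightarrow> distr M lborel (U n) = uniform_measure lborel {0..1}"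
    and Tm: "\<And>n i. n \<ge> 1 \<Longrightarrow> i < d \<Longrightarrow> T n i \<in> borel_measurable M"
    and T01: "\<And>n i \<omega>. n \<ge> 1 \<Longrightarrow> i < d \<Longrightarrow> \<omega> \<in> space M \<Longrightarrow> T n i \<omega> \<in> {0, 1}"
    and Tp: "\<And>n i. n \<ge> 1 \<Longrightarrow> i < d \<Longrightarrow> measure M {\<omega> \<in> space M. T n i \<omega> = 1} = p i"
    and IND: "prob_space.indep_sets M
           (\<lambda>k. case k of
                   IY \<Rightarrow> gen_sigma M {Y0 j | j. j < d}
                 | IU n \<Rightarrow> gen_sigma M {U n}
                 | IT n i \<Rightarrow> gen_sigma M {T n i})
           ({IY} \<union> {IU n | n. n \<ge> 1} \<union> {IT n i | n i. n \<ge> 1 \<and> i < d})"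
begin

definition "F k = (case k of IY \<Rightarrow> gen_sigma M {Y0 j | j. j < d} | IU n \<Rightarrow> gen_sigma M {U n} | IT n i \<Rightarrow> gen_sigma M {T n i})"
definition "Ifull = {IY} \<union> {IU n | n. n \<ge> 1} \<union> {IT n i | n i. n \<ge> 1 \<and> i < d}"
definition "Past a b = {IY} \<union> {IU k | k. 1 \<le> k \<and> k \<le> a} \<union> {IT k l | k l. 1 \<le> k \<and> k \<le> b \<and> l < d}"
definition "MG a b = sigma (space M) (\<Union>i\<in>Past a b. F i)"

lemma IND': "prob_space.indep_sets M F Ifull"
proof -
  have "F = (\<lambda>k. case k of IY \<Rightarrow> gen_sigma M {Y0 j | j. j < d} | IU n \<Rightarrow> gen_sigma M {U n} | IT n i \<Rightarrow> gen_sigma M {T n i})"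
    by (rule ext) (simp add: F_def)
  then show ?thesis using IND by (simp add: Ifull_def)
qed

lemma F_stable: "Int_stable (F i)"
  by (cases i) (simp_all add: F_def gen_sigma_Int_stable)

lemma F_events: "i \<in> Ifull \<Longrightarrow> F i \<subseteq> sets M"
  using IND' PS unfolding prob_space.indep_sets_def[OF PS] by blast

lemma Past_sub: "Past a b \<subseteq> Ifull"
  by (auto simp: Past_def Ifull_def)

lemma UF_events: "(\<Union>i\<in>Past a b. F i) \<subseteq> sets M"
  using F_events Past_sub by blast

lemma UF_Pow: "(\<Union>i\<in>Past a b. F i) \<subseteq> Pow (space M)"
  using UF_events sets.sets_into_space by blast

lemma MG_sets: "sets (MG a b) \<subseteq> sets M" and MG_space: "space (MG a b) = space M"
  unfolding MG_def using sigma_sub[OF UF_events] by auto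

lemma Y0_MG: "j < d \<Longrightarrow> Y0 j \<in> borel_measurable (MG a b)"
  unfolding MG_def
proof (rule meas_in_sigma[OF _ UF_Pow])
  assume j: "j < d"
  have "{Y0 j -` A \<inter> space M |A. A \<in> sets borel} \<subseteq> F IY"
    unfolding F_def using j by (auto intro!: gen_sigma_sub[THEN subsetD])
  then show "{Y0 j -` A \<inter> space M |A. A \<in> sets borel} \<subseteq> (\<Union>i\<in>Past a b. F i)"
    by (auto simp: Past_def)
qed

lemma U_MG: "1 \<le> k \<Longrightarrow> k \<le> a \<Longrightarrow> U k \<in> borel_measurable (MG a b)"
  unfolding MG_def
proof (rule meas_in_sigma[OF _ UF_Pow])
  assume k: "1 \<le> k" "k \<le> a"
  have "{U k -` A \<inter> space M |A. A \<in> sets borel} \<subseteq> F (IU k)"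
    unfolding F_def by (auto intro!: gen_sigma_sub[THEN subsetD])
  then show "{U k -` A \<inter> space M |A. A \<in> sets borel} \<subseteq> (\<Union>i\<in>Past a b. F i)"
    using k by (auto simp: Past_def)
qed

lemma T_MG: "1 \<le> k \<Longrightarrow> k \<le> b \<Longrightarrow> l < d \<Longrightarrow> T k l \<in> borel_measurable (MG a b)"
  unfolding MG_def
proof (rule meas_in_sigma[OF _ UF_Pow])
  assume k: "1 \<le> k" "k \<le> b" "l < d"
  have "{T k l -` A \<inter> space M |A. A \<in> sets borel} \<subseteq> F (IT k l)"
    unfolding F_def by (auto intro!: gen_sigma_sub[THEN subsetD])
  moreover have "IT k l \<in> Past a b" using k by (auto simp: Past_def)
  ultimately show "{T k l -` A \<inter> space M |A. A \<in> sets borel} \<subseteq> (\<Union>i\<in>Past a b. F i)"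
    by blast
qed

lemma indep_T: "1 \<le> m \<Longrightarrow> i < d \<Longrightarrow> indep_past M (MG m (m - 1)) (T m i)"
  unfolding MG_def
proof (rule indep_var_split[OF PS IND' F_stable])
  assume m: "1 \<le> m" "i < d"
  show "Past m (m - 1) \<subseteq> Ifull" by (rule Past_sub)
  show "{IT m i} \<subseteq> Ifull" using m by (auto simp: Ifull_def)
  show "Past m (m - 1) \<inter> {IT m i} = {}" using m by (auto simp: Past_def)
  have "{IT m i} \<subseteq> Ifull" using m by (auto simp: Ifull_def)
  then have P: "(\<Union>j\<in>{IT m i}. F j) \<subseteq> Pow (space M)" using F_events sets.sets_into_space by blast
  show "T m i \<in> borel_measurable (sigma (space M) (\<Union>j\<in>{IT m i}. F j))"
    by (rule meas_in_sigma[OF _ P]) (auto simp: F_def intro!: gen_sigma_sub[THEN subsetD])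
qed

lemma indep_U: "1 \<le> m \<Longrightarrow> indep_past M (MG (m - 1) (m - 1)) (U m)"
  unfolding MG_def
proof (rule indep_var_split[OF PS IND' F_stable])
  assume m: "1 \<le> m"
  show "Past (m - 1) (m - 1) \<subseteq> Ifull" by (rule Past_sub)
  show "{IU m} \<subseteq> Ifull" using m by (auto simp: Ifull_def)
  show "Past (m - 1) (m - 1) \<inter> {IU m} = {}" using m by (auto simp: Past_def)
  have "{IU m} \<subseteq> Ifull" using m by (auto simp: Ifull_def)
  then have P: "(\<Union>j\<in>{IU m}. F j) \<subseteq> Pow (space M)" using F_events sets.sets_into_space by blast
  show "U m \<in> borel_measurable (sigma (space M) (\<Union>j\<in>{IU m}. F j))"
    by (rule meas_in_sigma[OF _ P]) (auto simp: F_def intro!: gen_sigma_sub[THEN subsetD])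
qed


abbreviation "Yw n i \<omega> \<equiv> Yf d (\<lambda>j. Y0 j \<omega>) (\<lambda>n. U n \<omega>) (\<lambda>n i. T n i \<omega>) n i"
abbreviation "Nw n i \<omega> \<equiv> Nf d (\<lambda>j. Y0 j \<omega>) (\<lambda>n. U n \<omega>) (\<lambda>n i. T n i \<omega>) n i"
abbreviation "Sw n i \<omega> \<equiv> Sf d (\<lambda>j. Y0 j \<omega>) (\<lambda>n. U n \<omega>) (\<lambda>n i. T n i \<omega>) n i"
abbreviation "Xw n j \<omega> \<equiv> urn_X d (Yf d (\<lambda>j. Y0 j \<omega>) (\<lambda>n. U n \<omega>) (\<lambda>n i. T n i \<omega>) n) (U (Suc n) \<omega>) j"

lemma det: "\<omega> \<in> space M \<Longrightarrow> urn_det d (\<lambda>j. Y0 j \<omega>) (\<lambda>n i. T n i \<omega>)"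
  using d2 T01 Y0pos by unfold_locales auto

lemma YNS_MG:
  assumes "n \<le> a" "n \<le> b" "i < d"
  shows "(\<lambda>\<omega>. Yw n i \<omega>) \<in> borel_measurable (MG a b)" "(\<lambda>\<omega>. Nw n i \<omega>) \<in> borel_measurable (MG a b)"
    "(\<lambda>\<omega>. Sw n i \<omega>) \<in> borel_measurable (MG a b)"
proof -
  have "\<forall>i<d. (\<lambda>\<omega>. Yw n i \<omega>) \<in> borel_measurable (MG a b) \<and> (\<lambda>\<omega>. Nw n i \<omega>) \<in> borel_measurable (MG a b)
      \<and> (\<lambda>\<omega>. Sw n i \<omega>) \<in> borel_measurable (MG a b)"
    using assms by (intro urn_meas Y0_MG U_MG T_MG) auto
  then show "(\<lambda>\<omega>. Yw n i \<omega>) \<in> borel_measurable (MG a b)" "(\<lambda>\<omega>. Nw n i \<omega>) \<in> borel_measurable (MG a b)"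
    "(\<lambda>\<omega>. Sw n i \<omega>) \<in> borel_measurable (MG a b)" using assms(3) by auto
qed

lemma X_MG:
  assumes "Suc n \<le> a" "n \<le> b" "j < d"
  shows "(\<lambda>\<omega>. Xw n j \<omega>) \<in> borel_measurable (MG a b)"
  using assms by (intro urn_X_meas YNS_MG U_MG) auto

lemma X_MG_u:
  assumes "n \<le> a" "n \<le> b" "j < d"
  shows "(\<lambda>(\<omega>, u). urn_X d (Yf d (\<lambda>j. Y0 j \<omega>) (\<lambda>n. U n \<omega>) (\<lambda>n i. T n i \<omega>) n) u j)
     \<in> borel_measurable (MG a b \<Otimes>\<^sub>M borel)"
proof -
  have "(\<lambda>x. urn_X d (Yf d (\<lambda>j. Y0 j (fst x)) (\<lambda>n. U n (fst x)) (\<lambda>n i. T n i (fst x)) n) (snd x) j)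
     \<in> borel_measurable (MG a b \<Otimes>\<^sub>M borel)"
  proof (rule urn_X_meas[OF _ _ assms(3)])
    fix l assume "l < d"
    then have "(\<lambda>\<omega>. Yw n l \<omega>) \<in> borel_measurable (MG a b)" using assms by (intro YNS_MG) auto
    then show "(\<lambda>x. Yf d (\<lambda>j. Y0 j (fst x)) (\<lambda>n. U n (fst x)) (\<lambda>n i. T n i (fst x)) n l) \<in> borel_measurable (MG a b \<Otimes>\<^sub>M borel)"
      by measurable
  qed measurable
  then show ?thesis by (simp add: case_prod_beta')
qed

lemma M_events: "prob_space M" by (rule PS)

end

lemma exp_quad: "\<bar>x::real\<bar> \<le> 1 \<Longrightarrow> exp x \<le> 1 + x + x\<^sup>2"
proof (cases "0 \<le> x")
  case True
  assume "\<bar>x\<bar> \<le> 1"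
  then show ?thesis using exp_bound[of x] True by auto
next
  case False
  assume a: "\<bar>x\<bar> \<le> 1"
  define y where "y = - x"
  have y: "0 < y" "y \<le> 1" using False a by (auto simp: y_def)
  have pos: "0 < 1 - y + y\<^sup>2" using y by (smt (verit) power2_eq_square mult_pos_pos)
  have "1 + y \<le> exp y" by (rule exp_ge_add_one_self)
  then have "(1 - y + y\<^sup>2) * (1 + y) \<le> (1 - y + y\<^sup>2) * exp y" using pos by (intro mult_left_mono) auto
  moreover have "(1 - y + y\<^sup>2) * (1 + y) = 1 + y ^ 3" by (simp add: algebra_simps power2_eq_square power3_eq_cube)
  moreover have "0 \<le> y ^ 3" using y by simp
  ultimately have "1 \<le> (1 - y + y\<^sup>2) * exp y" by linarith
  then have "exp (- y) \<le> 1 - y + y\<^sup>2" by (simp add: exp_minus field_simps)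
  then show ?thesis by (simp add: y_def)
qed

lemma hoeff:
  fixes l q :: real
  assumes "\<bar>l\<bar> \<le> 1" "0 \<le> q" "q \<le> 1"
  shows "q * exp (l * (1 - q)) + (1 - q) * exp (- (l * q)) \<le> exp (l\<^sup>2)"
proof -
  have a1: "\<bar>l * (1 - q)\<bar> \<le> 1" using assms by (simp add: abs_mult mult_le_one)
  have a2: "\<bar>- (l * q)\<bar> \<le> 1" using assms by (simp add: abs_mult mult_le_one)
  have "q * exp (l * (1 - q)) \<le> q * (1 + l * (1 - q) + (l * (1 - q))\<^sup>2)"
    using exp_quad[OF a1] assms by (intro mult_left_mono) auto
  moreover have "(1 - q) * exp (- (l * q)) \<le> (1 - q) * (1 + - (l * q) + (- (l * q))\<^sup>2)"
    using exp_quad[OF a2] assms by (intro mult_left_mono) auto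
  moreover have "q * (1 + l * (1 - q) + (l * (1 - q))\<^sup>2) + (1 - q) * (1 + - (l * q) + (- (l * q))\<^sup>2)
      = 1 + l\<^sup>2 * (q * (1 - q))" by (simp add: algebra_simps power2_eq_square)
  moreover have "l\<^sup>2 * (q * (1 - q)) \<le> l\<^sup>2"
  proof -
    have "q * (1 - q) \<le> 1" using assms by (simp add: mult_le_one)
    then show ?thesis by (simp add: mult_left_le)
  qed
  moreover have "1 + l\<^sup>2 \<le> exp (l\<^sup>2)" by (rule exp_ge_add_one_self)
  ultimately show ?thesis by linarith
qed

lemma bern_integral:
  fixes V :: "'a \<Rightarrow> real"
  assumes P: "prob_space M" and V: "V \<in> borel_measurable M" and V01: "\<And>\<omega>. \<omega> \<in> space M \<Longrightarrow> V \<omega> \<in> {0,1}"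
    and q: "measure M {\<omega>\<in>space M. V \<omega> = 1} = q" and g: "g \<in> borel_measurable borel"
  shows "(\<integral>\<^sup>+v. g v \<partial>distr M borel V) = g 1 * ennreal q + g 0 * ennreal (1 - q)"
proof -
  interpret prob_space M by fact
  let ?A = "{\<omega>\<in>space M. V \<omega> = 1}" and ?B = "{\<omega>\<in>space M. V \<omega> = 0}"
  have "V -` {1} \<inter> space M \<in> events" by (intro measurable_sets[OF V] borel_closed) simp
  moreover have "V -` {0} \<inter> space M \<in> events" by (intro measurable_sets[OF V] borel_closed) simp
  moreover have "?A = V -` {1} \<inter> space M" by auto
  moreover have "?B = V -` {0} \<inter> space M" by auto
  ultimately have Am: "?A \<in> events" and Bm: "?B \<in> events" by simp_all
  have B: "?B = space M - ?A" using V01 by auto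
  have "(\<integral>\<^sup>+v. g v \<partial>distr M borel V) = (\<integral>\<^sup>+\<omega>. g (V \<omega>) \<partial>M)"
    using V g by (subst nn_integral_distr) auto
  also have "\<dots> = (\<integral>\<^sup>+\<omega>. g 1 * indicator ?A \<omega> + g 0 * indicator ?B \<omega> \<partial>M)"
    by (intro nn_integral_cong) (use V01 in \<open>auto split: split_indicator\<close>)
  also have "\<dots> = g 1 * emeasure M ?A + g 0 * emeasure M ?B"
    using Am Bm by (simp add: nn_integral_add nn_integral_cmult_indicator)
  also have "emeasure M ?A = ennreal q" using q by (simp add: emeasure_eq_measure)
  also have "emeasure M ?B = ennreal (1 - q)"
    using prob_compl[OF Am] q B by (simp add: emeasure_eq_measure)
  finally show ?thesis .
qed


context urn_det
begin

lemma N_int: "\<exists>c::nat. N n i = real c"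
proof (induction n)
  case 0 then show ?case by (auto simp: Nf_0 intro: exI[of _ 1])
next
  case (Suc n)
  then obtain c :: nat where c: "N n i = real c" by blast
  show ?case
  proof (cases "Xs n i = 0")
    case True then show ?thesis using c by (auto simp: N_Suc)
  next
    case False then have "Xs n i = 1" using Xs01 by blast
    then show ?thesis using c by (auto simp: N_Suc intro: exI[of _ "Suc c"])
  qed
qed

lemma stopped:
  fixes i k :: nat and q :: real
  assumes i: "i < d"
  defines "H m \<equiv> (if N (m - 1) i \<le> real k then 1 else 0::real)"
  defines "W L \<equiv> \<Sum>m\<in>{1..L}. H m * Xs (m - 1) i * (t m i - q)"
  defines "Q L \<equiv> \<Sum>m\<in>{1..L}. H m * Xs (m - 1) i"
  defines "Mn n \<equiv> S n i - 1 - q * (N n i - 1)"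
  shows "(N L i \<le> real k + 1 \<longrightarrow> W L = Mn L \<and> Q L = N L i - 1) \<and>
         (\<forall>n\<le>L. N n i = real k + 1 \<longrightarrow> W L = Mn n \<and> Q L = real k)"
proof (induction L)
  case 0
  show ?case by (simp add: W_def Q_def Mn_def Nf_0 Sf_0)
next
  case (Suc L)
  let ?X = "Xs L i"
  have W: "W (Suc L) = W L + H (Suc L) * ?X * (t (Suc L) i - q)" by (simp add: W_def)
  have Q: "Q (Suc L) = Q L + H (Suc L) * ?X" by (simp add: Q_def)
  have NS: "N (Suc L) i = N L i + ?X" by (rule N_Suc)
  have MS: "Mn (Suc L) = Mn L + ?X * (t (Suc L) i - q)" by (simp add: Mn_def Sf_Suc N_Suc algebra_simps)
  have X01: "?X = 0 \<or> ?X = 1" by (rule Xs01)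
  have mono: "\<And>n. n \<le> L \<Longrightarrow> N n i \<le> N L i" by (rule N_mono)
  show ?case
  proof (cases "N L i \<le> real k")
    case True
    then have H1: "H (Suc L) = 1" by (simp add: H_def)
    have IH1: "W L = Mn L" "Q L = N L i - 1" using Suc True by auto
    have c1: "W (Suc L) = Mn (Suc L)" "Q (Suc L) = N (Suc L) i - 1"
      using W Q H1 IH1 MS NS by auto
    have A: "\<forall>n\<le>Suc L. N n i = real k + 1 \<longrightarrow> W (Suc L) = Mn n \<and> Q (Suc L) = real k"
    proof (intro allI impI)
      fix n assume n: "n \<le> Suc L" "N n i = real k + 1"
      have "n = Suc L"
      proof (rule ccontr)
        assume "n \<noteq> Suc L" then have "n \<le> L" using n by simp
        then show False using mono[of n] n True by simp
      qed
      then show "W (Suc L) = Mn n \<and> Q (Suc L) = real k" using c1 n by auto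
    qed
    show ?thesis using A c1 by auto
  next
    case False
    then have H0: "H (Suc L) = 0" by (simp add: H_def)
    obtain c :: nat where c: "N L i = real c" using N_int by blast
    have ge: "real k + 1 \<le> N L i" using False c by simp
    have c0: "W (Suc L) = W L" "Q (Suc L) = Q L" using W Q H0 by auto
    have B: "N (Suc L) i \<le> real k + 1 \<longrightarrow> W (Suc L) = Mn (Suc L) \<and> Q (Suc L) = N (Suc L) i - 1"
    proof
      assume a: "N (Suc L) i \<le> real k + 1"
      then have eq: "N L i = real k + 1" "?X = 0" using ge NS X01 by auto
      then have "W L = Mn L" "Q L = real k" using Suc by auto
      then show "W (Suc L) = Mn (Suc L) \<and> Q (Suc L) = N (Suc L) i - 1" using c0 eq MS NS by auto
    qed
    have A: "\<forall>n\<le>Suc L. N n i = real k + 1 \<longrightarrow> W (Suc L) = Mn n \<and> Q (Suc L) = real k"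
    proof (intro allI impI)
      fix n assume n: "n \<le> Suc L" "N n i = real k + 1"
      show "W (Suc L) = Mn n \<and> Q (Suc L) = real k"
      proof (cases "n \<le> L")
        case True then show ?thesis using Suc n c0 by auto
      next
        case False then have nL: "n = Suc L" using n by simp
        then have eq: "N L i = real k + 1" "?X = 0" using ge NS X01 n by auto
        then have "W L = Mn L" "Q L = real k" using Suc by auto
        then show ?thesis using c0 eq MS nL by auto
      qed
    qed
    show ?thesis using A B by blast
  qed
qed

end

context urn_prob
begin

definition "cc i k m \<omega> = (if Nw (m - 1) i \<omega> \<le> real k then 1 else 0) * Xw (m - 1) i \<omega>"
definition "phiA i k l m = (\<lambda>(\<omega>, v). l * cc i k m \<omega> * (v - p i) - l\<^sup>2 * cc i k m \<omega>)"

lemma cc_01: "cc i k m \<omega> = 0 \<or> cc i k m \<omega> = 1"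
  by (simp add: cc_def urn_X_def)

lemma cc_MG: "1 \<le> m \<Longrightarrow> m \<le> a \<Longrightarrow> m - 1 \<le> b \<Longrightarrow> i < d \<Longrightarrow> cc i k m \<in> borel_measurable (MG a b)"
proof -
  assume m: "1 \<le> m" "m \<le> a" "m - 1 \<le> b" "i < d"
  have [measurable]: "(\<lambda>\<omega>. Nw (m - 1) i \<omega>) \<in> borel_measurable (MG a b)" using m by (intro YNS_MG) auto
  have [measurable]: "(\<lambda>\<omega>. Xw (m - 1) i \<omega>) \<in> borel_measurable (MG a b)" using m by (intro X_MG) auto
  show ?thesis unfolding cc_def[abs_def] by measurable
qed

lemma partA_exp:
  assumes i: "i < d" and l: "\<bar>l\<bar> \<le> 1"
  shows "(\<integral>\<^sup>+\<omega>. ennreal (exp (\<Sum>m\<in>{1..n}. phiA i k l m (\<omega>, T m i \<omega>))) \<partial>M) \<le> 1"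
proof (rule exp_sum_le1[OF PS, where Mg = "\<lambda>m. MG m (m - 1)"])
  fix m :: nat assume m: "1 \<le> m"
  show "indep_past M (MG m (m - 1)) (T m i)" using indep_T[OF m i] .
  have [measurable]: "cc i k m \<in> borel_measurable (MG m (m - 1))" using m i by (intro cc_MG) auto
  show "phiA i k l m \<in> borel_measurable (MG m (m - 1) \<Otimes>\<^sub>M borel)"
    unfolding phiA_def by measurable
  show "(\<lambda>\<omega>. \<Sum>k'\<in>{1..<m}. phiA i k l k' (\<omega>, T k' i \<omega>)) \<in> borel_measurable (MG m (m - 1))"
  proof (intro borel_measurable_sum)
    fix k' assume k': "k' \<in> {1..<m}"
    have [measurable]: "cc i k k' \<in> borel_measurable (MG m (m - 1))" using k' i by (intro cc_MG) auto
    have [measurable]: "T k' i \<in> borel_measurable (MG m (m - 1))" using k' i by (intro T_MG) auto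
    show "(\<lambda>\<omega>. phiA i k l k' (\<omega>, T k' i \<omega>)) \<in> borel_measurable (MG m (m - 1))"
      unfolding phiA_def by measurable
  qed
  fix \<omega> assume \<omega>: "\<omega> \<in> space M"
  have "(\<lambda>v. ennreal (exp (l * cc i k m \<omega> * (v - p i) - l\<^sup>2 * cc i k m \<omega>))) \<in> borel_measurable borel"
    by measurable
  then have g: "(\<lambda>v. ennreal (exp (phiA i k l m (\<omega>, v)))) \<in> borel_measurable borel"
    by (simp add: phiA_def)
  have p: "0 < p i" "p i < 1" using p01[OF i] by auto
  have "(\<integral>\<^sup>+v. ennreal (exp (phiA i k l m (\<omega>, v))) \<partial>distr M borel (T m i))
      = ennreal (exp (phiA i k l m (\<omega>, 1))) * ennreal (p i) + ennreal (exp (phiA i k l m (\<omega>, 0))) * ennreal (1 - p i)"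
    using T01[OF m i] Tp[OF m i] Tm[OF m i] by (intro bern_integral[OF PS _ _ _ g]) auto
  also have "\<dots> = ennreal (p i * exp (phiA i k l m (\<omega>, 1)) + (1 - p i) * exp (phiA i k l m (\<omega>, 0)))"
  proof -
    have "ennreal (p i * exp (phiA i k l m (\<omega>, 1)) + (1 - p i) * exp (phiA i k l m (\<omega>, 0)))
        = ennreal (exp (phiA i k l m (\<omega>, 1)) * p i) + ennreal (exp (phiA i k l m (\<omega>, 0)) * (1 - p i))"
      using p by (subst ennreal_plus[symmetric]) (auto simp: mult.commute)
    also have "\<dots> = ennreal (exp (phiA i k l m (\<omega>, 1))) * ennreal (p i) + ennreal (exp (phiA i k l m (\<omega>, 0))) * ennreal (1 - p i)"
      using p by (simp only: ennreal_mult[symmetric] exp_ge_zero less_imp_le diff_ge_0_iff_ge)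
    finally show ?thesis by simp
  qed
  also have "\<dots> \<le> 1"
  proof (cases "cc i k m \<omega> = 0")
    case True
    then show ?thesis by (simp add: phiA_def)
  next
    case False
    then have c1: "cc i k m \<omega> = 1" using cc_01 by blast
    have "p i * exp (l * (1 - p i)) + (1 - p i) * exp (- (l * p i)) \<le> exp (l\<^sup>2)"
      using hoeff[OF l, of "p i"] p by simp
    then have "exp (- l\<^sup>2) * (p i * exp (l * (1 - p i)) + (1 - p i) * exp (- (l * p i))) \<le> exp (- l\<^sup>2) * exp (l\<^sup>2)"
      by (intro mult_left_mono) auto
    also have "\<dots> = 1" by (simp add: exp_minus)
    finally have "exp (- l\<^sup>2) * (p i * exp (l * (1 - p i)) + (1 - p i) * exp (- (l * p i))) \<le> 1" .
    moreover have "p i * exp (phiA i k l m (\<omega>, 1)) + (1 - p i) * exp (phiA i k l m (\<omega>, 0))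
        = exp (- l\<^sup>2) * (p i * exp (l * (1 - p i)) + (1 - p i) * exp (- (l * p i)))"
      using c1 by (simp add: phiA_def exp_diff exp_minus field_simps exp_add[symmetric])
    ultimately show ?thesis by simp
  qed
  finally show "(\<integral>\<^sup>+v. ennreal (exp (phiA i k l m (\<omega>, v))) \<partial>distr M borel (T m i)) \<le> 1" .
qed


definition "Mw i n \<omega> = Sw n i \<omega> - 1 - p i * (Nw n i \<omega> - 1)"

lemma cc_M: "1 \<le> m \<Longrightarrow> i < d \<Longrightarrow> cc i k m \<in> borel_measurable M"
  by (rule measurable_sub[OF MG_sets MG_space cc_MG[of m m "m - 1"]]) auto

lemma partA_bound:
  assumes i: "i < d" and l: "\<bar>l\<bar> \<le> 1"
  shows "measure M {\<omega>\<in>space M. \<exists>n\<le>L. Nw n i \<omega> = real k + 1 \<and> a \<le> l * Mw i n \<omega> - l\<^sup>2 * real k} \<le> exp (- a)"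
proof -
  interpret prob_space M by (rule PS)
  define f where "f \<omega> = (\<Sum>m\<in>{1..L}. phiA i k l m (\<omega>, T m i \<omega>))" for \<omega>
  have fm: "f \<in> borel_measurable M" unfolding f_def
  proof (intro borel_measurable_sum)
    fix m assume m: "m \<in> {1..L}"
    have [measurable]: "cc i k m \<in> borel_measurable M" "T m i \<in> borel_measurable M"
      using m i cc_M Tm by auto
    show "(\<lambda>\<omega>. phiA i k l m (\<omega>, T m i \<omega>)) \<in> borel_measurable M" unfolding phiA_def by measurable
  qed
  have "measure M {\<omega>\<in>space M. \<exists>n\<le>L. Nw n i \<omega> = real k + 1 \<and> a \<le> l * Mw i n \<omega> - l\<^sup>2 * real k}
      \<le> measure M {\<omega>\<in>space M. a \<le> f \<omega>}"
  proof (rule finite_measure_mono)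
    show "{\<omega>\<in>space M. a \<le> f \<omega>} \<in> events" using fm by measurable
    show "{\<omega>\<in>space M. \<exists>n\<le>L. Nw n i \<omega> = real k + 1 \<and> a \<le> l * Mw i n \<omega> - l\<^sup>2 * real k} \<subseteq> {\<omega>\<in>space M. a \<le> f \<omega>}"
    proof safe
      fix \<omega> n assume \<omega>: "\<omega> \<in> space M" and n: "n \<le> L" "Nw n i \<omega> = real k + 1" "a \<le> l * Mw i n \<omega> - l\<^sup>2 * real k"
      interpret D: urn_det d "\<lambda>j. Y0 j \<omega>" "\<lambda>n. U n \<omega>" "\<lambda>n i. T n i \<omega>" using det[OF \<omega>] .
      note st = D.stopped[OF i, where k=k and q="p i" and L=L]
      have "f \<omega> = l * (\<Sum>m\<in>{1..L}. cc i k m \<omega> * (T m i \<omega> - p i)) - l\<^sup>2 * (\<Sum>m\<in>{1..L}. cc i k m \<omega>)"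
        unfolding f_def phiA_def by (simp add: sum_subtractf sum_distrib_left mult.assoc)
      also have "\<dots> = l * Mw i n \<omega> - l\<^sup>2 * real k"
        using st n unfolding cc_def Mw_def by (auto simp: mult.assoc)
      finally show "a \<le> f \<omega>" using n by simp
    qed
  qed
  also have "\<dots> \<le> exp (- a)"
    by (rule markov_exp[OF PS fm]) (unfold f_def, rule partA_exp[OF i l])
  finally show ?thesis .
qed


lemma NSY_M: "i < d \<Longrightarrow> (\<lambda>\<omega>. Nw n i \<omega>) \<in> borel_measurable M" "i < d \<Longrightarrow> (\<lambda>\<omega>. Sw n i \<omega>) \<in> borel_measurable M"
  "i < d \<Longrightarrow> (\<lambda>\<omega>. Yw n i \<omega>) \<in> borel_measurable M"
proof -
  assume i: "i < d"
  show "(\<lambda>\<omega>. Nw n i \<omega>) \<in> borel_measurable M" by (rule measurable_sub[OF MG_sets MG_space YNS_MG(2)[of n n n]]) (use i in auto)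
  show "(\<lambda>\<omega>. Sw n i \<omega>) \<in> borel_measurable M" by (rule measurable_sub[OF MG_sets MG_space YNS_MG(3)[of n n n]]) (use i in auto)
  show "(\<lambda>\<omega>. Yw n i \<omega>) \<in> borel_measurable M" by (rule measurable_sub[OF MG_sets MG_space YNS_MG(1)[of n n n]]) (use i in auto)
qed

lemma Mw_M: "i < d \<Longrightarrow> Mw i n \<in> borel_measurable M"
  using NSY_M[of i n] unfolding Mw_def[abs_def] by measurable

definition "Aev i \<epsilon> k = {\<omega>\<in>space M. \<exists>n. Nw n i \<omega> = real k + 1 \<and> \<epsilon> * real k \<le> \<bar>Mw i n \<omega>\<bar>}"

lemma Aev_sets: "i < d \<Longrightarrow> Aev i \<epsilon> k \<in> sets M"
proof -
  assume i: "i < d"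
  have [measurable]: "(\<lambda>\<omega>. Nw n i \<omega>) \<in> borel_measurable M" "Mw i n \<in> borel_measurable M" for n
    using NSY_M Mw_M i by auto
  show ?thesis unfolding Aev_def by measurable
qed

lemma Aev_bound:
  assumes i: "i < d" and e: "0 < \<epsilon>" "\<epsilon> \<le> 1"
  shows "measure M (Aev i \<epsilon> k) \<le> 2 * exp (- (\<epsilon>\<^sup>2 / 4 * real k))"
proof -
  interpret prob_space M by (rule PS)
  have [measurable]: "(\<lambda>\<omega>. Nw n i \<omega>) \<in> borel_measurable M" "Mw i n \<in> borel_measurable M" for n
    using NSY_M Mw_M i by auto
  define G where "G L = {\<omega>\<in>space M. \<exists>n\<le>L. Nw n i \<omega> = real k + 1 \<and> \<epsilon> * real k \<le> \<bar>Mw i n \<omega>\<bar>}" for L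
  have Gm[measurable]: "G L \<in> events" for L unfolding G_def by measurable
  let ?a = "\<epsilon>\<^sup>2 / 4 * real k"
  have l1: "\<bar>\<epsilon> / 2\<bar> \<le> 1" "\<bar>- (\<epsilon> / 2)\<bar> \<le> 1" using e by auto
  have GL: "measure M (G L) \<le> 2 * exp (- ?a)" for L
  proof -
    let ?P = "{\<omega>\<in>space M. \<exists>n\<le>L. Nw n i \<omega> = real k + 1 \<and> ?a \<le> (\<epsilon> / 2) * Mw i n \<omega> - (\<epsilon> / 2)\<^sup>2 * real k}"
    let ?Q = "{\<omega>\<in>space M. \<exists>n\<le>L. Nw n i \<omega> = real k + 1 \<and> ?a \<le> (- (\<epsilon> / 2)) * Mw i n \<omega> - (- (\<epsilon> / 2))\<^sup>2 * real k}"
    have Pm: "?P \<in> events" and Qm: "?Q \<in> events" by measurable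
    have sub: "G L \<subseteq> ?P \<union> ?Q"
    proof (intro subsetI)
      fix \<omega> assume "\<omega> \<in> G L"
      then obtain n where \<omega>: "\<omega> \<in> space M" "n \<le> L" "Nw n i \<omega> = real k + 1" "\<epsilon> * real k \<le> \<bar>Mw i n \<omega>\<bar>"
        unfolding G_def by blast
      show "\<omega> \<in> ?P \<union> ?Q"
      proof (cases "0 \<le> Mw i n \<omega>")
        case True
        then have "\<epsilon> * real k \<le> Mw i n \<omega>" using \<omega> by simp
        then have "(\<epsilon> / 2) * (\<epsilon> * real k) \<le> (\<epsilon> / 2) * Mw i n \<omega>" using e by (intro mult_left_mono) auto
        moreover have "(\<epsilon> / 2) * (\<epsilon> * real k) = 2 * ?a" "(\<epsilon> / 2)\<^sup>2 * real k = ?a"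
          by (simp_all add: power2_eq_square)
        ultimately have "?a \<le> (\<epsilon> / 2) * Mw i n \<omega> - (\<epsilon> / 2)\<^sup>2 * real k" by linarith
        then have "\<omega> \<in> ?P" using \<omega> by blast
        then show ?thesis by (rule UnI1)
      next
        case False
        then have "\<epsilon> * real k \<le> - Mw i n \<omega>" using \<omega> by simp
        then have "(\<epsilon> / 2) * (\<epsilon> * real k) \<le> (\<epsilon> / 2) * (- Mw i n \<omega>)" using e by (intro mult_left_mono) auto
        moreover have "(\<epsilon> / 2) * (\<epsilon> * real k) = 2 * ?a" "(- (\<epsilon> / 2))\<^sup>2 * real k = ?a"
          by (simp_all add: power2_eq_square)
        ultimately have "?a \<le> (- (\<epsilon> / 2)) * Mw i n \<omega> - (- (\<epsilon> / 2))\<^sup>2 * real k" by linarith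
        then have "\<omega> \<in> ?Q" using \<omega> by blast
        then show ?thesis by (rule UnI2)
      qed
    qed
    have "measure M (G L) \<le> measure M (?P \<union> ?Q)"
      using sub Pm Qm by (intro finite_measure_mono) auto
    also have "\<dots> \<le> measure M ?P + measure M ?Q" using Pm Qm by (rule measure_Un_le)
    also have "\<dots> \<le> exp (- ?a) + exp (- ?a)"
      using partA_bound[OF i l1(1), of L k ?a] partA_bound[OF i l1(2), of L k ?a] by linarith
    finally show ?thesis by simp
  qed
  have inc: "incseq G"
  proof (rule incseq_SucI)
    fix L show "G L \<subseteq> G (Suc L)" unfolding G_def by (auto intro: le_SucI)
  qed
  have UG: "Aev i \<epsilon> k = (\<Union>L. G L)"
  proof (intro equalityI subsetI)
    fix \<omega> assume "\<omega> \<in> Aev i \<epsilon> k"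
    then obtain n where "\<omega> \<in> space M" "Nw n i \<omega> = real k + 1" "\<epsilon> * real k \<le> \<bar>Mw i n \<omega>\<bar>"
      unfolding Aev_def by blast
    then have "\<omega> \<in> G n" unfolding G_def by blast
    then show "\<omega> \<in> (\<Union>L. G L)" by blast
  next
    fix \<omega> assume "\<omega> \<in> (\<Union>L. G L)"
    then show "\<omega> \<in> Aev i \<epsilon> k" unfolding Aev_def G_def by blast
  qed
  have "(\<lambda>L. measure M (G L)) \<longlonglongrightarrow> measure M (\<Union>L. G L)"
    using inc by (intro finite_Lim_measure_incseq) auto
  then show ?thesis unfolding UG using GL by (intro LIMSEQ_le_const2) auto
qed

lemma partA_AE:
  assumes i: "i < d"
  shows "AE \<omega> in M. \<forall>r::nat. eventually (\<lambda>k. \<omega> \<in> space M - Aev i (1 / (real r + 1)) k) sequentially"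
proof (subst AE_all_countable, intro allI)
  fix r :: nat
  interpret prob_space M by (rule PS)
  define e where "e = 1 / (real r + 1)"
  have e: "0 < e" "e \<le> 1" by (auto simp: e_def field_simps)
  define q where "q = exp (- (e\<^sup>2 / 4))"
  have q: "0 < q" "q < 1" using e by (auto simp: q_def)
  have "summable (\<lambda>k. measure M (Aev i e k))"
  proof (rule summable_comparison_test)
    show "\<exists>N. \<forall>k\<ge>N. norm (measure M (Aev i e k)) \<le> 2 * q ^ k"
    proof (intro exI allI impI)
      fix k :: nat
      have "exp (- (e\<^sup>2 / 4 * real k)) = q ^ k"
        unfolding q_def by (simp add: exp_of_nat_mult[symmetric] mult.commute)
      then show "norm (measure M (Aev i e k)) \<le> 2 * q ^ k" using Aev_bound[OF i e, of k] by simp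
    qed
    show "summable (\<lambda>k. 2 * q ^ k)" using q by (intro summable_mult summable_geometric) auto
  qed
  then show "AE \<omega> in M. eventually (\<lambda>k. \<omega> \<in> space M - Aev i (1 / (real r + 1)) k) sequentially"
    unfolding e_def[symmetric] using Aev_sets[OF i]
    by (intro borel_cantelli_AE1) (auto simp: emeasure_eq_measure)
qed


lemma small_inv: "0 < (e::real) \<Longrightarrow> \<exists>r::nat. 1 / (real r + 1) < e"
proof -
  assume "0 < e"
  then obtain n :: nat where "inverse (real (Suc n)) < e" using reals_Archimedean by blast
  then show ?thesis by (intro exI[of _ n]) (simp add: divide_inverse add.commute)
qed

lemma partA_det:
  assumes \<omega>: "\<omega> \<in> space M" and i: "i < d"
    and unb: "\<forall>B. \<exists>n. B < Nw n i \<omega>"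
    and ev: "\<forall>r::nat. eventually (\<lambda>k. \<omega> \<in> space M - Aev i (1 / (real r + 1)) k) sequentially"
  shows "(\<lambda>n. Sw n i \<omega> / Nw n i \<omega>) \<longlonglongrightarrow> p i"
proof (rule LIMSEQ_I)
  interpret D: urn_det d "\<lambda>j. Y0 j \<omega>" "\<lambda>n. U n \<omega>" "\<lambda>n i. T n i \<omega>" using det[OF \<omega>] .
  fix e :: real assume e: "0 < e"
  obtain r :: nat where r: "1 / (real r + 1) < e / 2" using small_inv[of "e / 2"] e by auto
  define \<epsilon> where "\<epsilon> = 1 / (real r + 1)"
  have \<epsilon>: "0 < \<epsilon>" "\<epsilon> < e / 2" using r by (auto simp: \<epsilon>_def)
  obtain K0 where K0: "\<And>k. K0 \<le> k \<Longrightarrow> \<omega> \<in> space M - Aev i \<epsilon> k"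
    using ev[rule_format, of r] unfolding \<epsilon>_def eventually_sequentially by blast
  obtain K1 :: nat where K1: "1 / (real K1 + 1) < e / 2" using small_inv[of "e / 2"] e by auto
  define K where "K = max K0 K1"
  obtain n0 where n0: "real K + 1 < Nw n0 i \<omega>" using unb by blast
  show "\<exists>no. \<forall>n\<ge>no. norm (Sw n i \<omega> / Nw n i \<omega> - p i) < e"
  proof (intro exI allI impI)
    fix n assume n: "n0 \<le> n"
    have "Nw n0 i \<omega> \<le> Nw n i \<omega>" using D.N_mono[OF n] .
    obtain c :: nat where c: "Nw n i \<omega> = real c" using D.N_int by blast
    have cK: "real K + 1 < real c" using n0 c \<open>Nw n0 i \<omega> \<le> Nw n i \<omega>\<close> by linarith
    define k where "k = c - 1"
    have kN: "Nw n i \<omega> = real k + 1" using c cK by (simp add: k_def of_nat_diff)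
    have kK: "K \<le> k" using cK by (simp add: k_def)
    have "\<omega> \<notin> Aev i \<epsilon> k" using K0[of k] kK by (auto simp: K_def)
    then have Mk: "\<bar>Mw i n \<omega>\<bar> < \<epsilon> * real k" using \<omega> kN unfolding Aev_def by force
    have p: "0 < p i" "p i < 1" using p01[OF i] by auto
    have Npos: "0 < real k + 1" by simp
    have "Sw n i \<omega> / Nw n i \<omega> - p i = (Mw i n \<omega> + (1 - p i)) / (real k + 1)"
      using kN Npos by (simp add: Mw_def field_simps)
    then have "\<bar>Sw n i \<omega> / Nw n i \<omega> - p i\<bar> = \<bar>Mw i n \<omega> + (1 - p i)\<bar> / (real k + 1)"
      using Npos by simp
    also have "\<dots> \<le> (\<epsilon> * real k + 1) / (real k + 1)"
      using Mk p Npos by (intro divide_right_mono) auto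
    also have "\<dots> = \<epsilon> * (real k / (real k + 1)) + 1 / (real k + 1)"
      using Npos by (simp add: field_simps)
    also have "\<dots> \<le> \<epsilon> * 1 + 1 / (real K1 + 1)"
    proof (intro add_mono mult_left_mono)
      show "real k / (real k + 1) \<le> 1" by simp
      show "1 / (real k + 1) \<le> 1 / (real K1 + 1)" using kK by (intro divide_left_mono) (auto simp: K_def)
    qed (use \<epsilon> in auto)
    also have "\<dots> < e" using \<epsilon> K1 by simp
    finally show "norm (Sw n i \<omega> / Nw n i \<omega> - p i) < e" by simp
  qed
qed

end


lemma unif_calc:
  fixes a b \<alpha> \<beta> :: real
  assumes ab: "0 \<le> a" "a \<le> b" "b \<le> 1" and nn: "0 \<le> \<alpha>" "0 \<le> \<beta>"
  shows "(\<integral>\<^sup>+u. ennreal \<alpha> * indicator {a<..b} u + ennreal \<beta> * indicator (- {a<..b}) u \<partial>uniform_measure lborel {0..1})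
       = ennreal (\<alpha> * (b - a) + \<beta> * (1 - (b - a)))"
proof -
  let ?Q = "uniform_measure lborel {0..1::real}"
  interpret Q: prob_space ?Q by (rule prob_space_uniform_measure) auto
  have A: "{a<..b} \<in> sets ?Q" "- {a<..b} \<in> sets ?Q" by auto
  have eA: "emeasure ?Q {a<..b} = ennreal (b - a)"
  proof -
    have "{0..1} \<inter> {a<..b} = {a<..b}" using ab by auto
    then have "emeasure ?Q {a<..b} = ennreal (b - a) / 1"
      using ab by (subst emeasure_uniform_measure) auto
    also have "\<dots> = ennreal (b - a)" using mult_divide_eq_ennreal[of 1 "ennreal (b - a)"] by simp
    finally show ?thesis .
  qed
  have mA: "measure ?Q {a<..b} = b - a" using eA ab by (simp add: Q.emeasure_eq_measure)
  have "measure ?Q (space ?Q - {a<..b}) = 1 - (b - a)" using Q.prob_compl[OF A(1)] mA by simp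
  moreover have "space ?Q - {a<..b} = - {a<..b}" by auto
  ultimately have eB: "emeasure ?Q (- {a<..b}) = ennreal (1 - (b - a))" by (simp add: Q.emeasure_eq_measure)
  have "(\<integral>\<^sup>+u. ennreal \<alpha> * indicator {a<..b} u + ennreal \<beta> * indicator (- {a<..b}) u \<partial>?Q)
      = ennreal \<alpha> * emeasure ?Q {a<..b} + ennreal \<beta> * emeasure ?Q (- {a<..b})"
    using A by (simp add: nn_integral_add nn_integral_cmult_indicator)
  also have "\<dots> = ennreal (\<alpha> * (b - a) + \<beta> * (1 - (b - a)))"
  proof -
    have "ennreal (\<alpha> * (b - a) + \<beta> * (1 - (b - a))) = ennreal (\<alpha> * (b - a)) + ennreal (\<beta> * (1 - (b - a)))"
      by (rule ennreal_plus) (use ab nn in auto)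
    also have "\<dots> = ennreal \<alpha> * ennreal (b - a) + ennreal \<beta> * ennreal (1 - (b - a))"
      using ab nn by (simp add: ennreal_mult)
    finally show ?thesis using eA eB by simp
  qed
  finally show ?thesis .
qed


context urn_prob
begin

definition "totw n \<omega> = (\<Sum>l<d. Yw n l \<omega>)"
definition "rhoB i m \<omega> = Yw (m - 1) i \<omega> / totw (m - 1) \<omega>"
definition "XB i m \<omega> u = urn_X d (Yf d (\<lambda>j. Y0 j \<omega>) (\<lambda>n. U n \<omega>) (\<lambda>n i. T n i \<omega>) (m - 1)) u i"
definition "AB i m \<omega> = (if m = 0 then 0 else XB i m \<omega> (U m \<omega>))"
definition "phiB i m = (\<lambda>(\<omega>, u). (1 - exp (- 1)) * rhoB i m \<omega> - XB i m \<omega> u)"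

lemma rhoB_MG: "i < d \<Longrightarrow> m - 1 \<le> a \<Longrightarrow> m - 1 \<le> b \<Longrightarrow> rhoB i m \<in> borel_measurable (MG a b)"
proof -
  assume a: "i < d" "m - 1 \<le> a" "m - 1 \<le> b"
  have [measurable]: "(\<lambda>\<omega>. Yw (m - 1) i \<omega>) \<in> borel_measurable (MG a b)" using a by (intro YNS_MG) auto
  have [measurable]: "totw (m - 1) \<in> borel_measurable (MG a b)"
    unfolding totw_def[abs_def] using a by (intro borel_measurable_sum YNS_MG) auto
  show ?thesis unfolding rhoB_def[abs_def] by measurable
qed

lemma XB_MG: "i < d \<Longrightarrow> m - 1 \<le> a \<Longrightarrow> m - 1 \<le> b \<Longrightarrow> (\<lambda>(\<omega>, u). XB i m \<omega> u) \<in> borel_measurable (MG a b \<Otimes>\<^sub>M borel)"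
  unfolding XB_def by (rule X_MG_u) auto

lemma XB_U_MG: "i < d \<Longrightarrow> 1 \<le> m \<Longrightarrow> m \<le> a \<Longrightarrow> m - 1 \<le> b \<Longrightarrow> (\<lambda>\<omega>. XB i m \<omega> (U m \<omega>)) \<in> borel_measurable (MG a b)"
proof -
  assume a: "i < d" "1 \<le> m" "m \<le> a" "m - 1 \<le> b"
  have "(\<lambda>\<omega>. (\<lambda>(\<omega>, u). XB i m \<omega> u) (\<omega>, U m \<omega>)) \<in> borel_measurable (MG a b)"
  proof (rule measurable_compose[OF _ XB_MG[OF a(1)]])
    show "(\<lambda>\<omega>. (\<omega>, U m \<omega>)) \<in> measurable (MG a b) (MG a b \<Otimes>\<^sub>M borel)"
      using U_MG[OF a(2,3)] by (intro measurable_Pair) auto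
  qed (use a in auto)
  then show ?thesis by simp
qed

lemma partB_exp:
  assumes i: "i < d"
  shows "(\<integral>\<^sup>+\<omega>. ennreal (exp (\<Sum>m\<in>{1..n}. phiB i m (\<omega>, U m \<omega>))) \<partial>M) \<le> 1"
proof (rule exp_sum_le1[OF PS, where Mg = "\<lambda>m. MG (m - 1) (m - 1)"])
  fix m :: nat assume m: "1 \<le> m"
  show "indep_past M (MG (m - 1) (m - 1)) (U m)" using indep_U[OF m] .
  have [measurable]: "rhoB i m \<in> borel_measurable (MG (m - 1) (m - 1))" using i by (intro rhoB_MG) auto
  have [measurable]: "(\<lambda>(\<omega>, u). XB i m \<omega> u) \<in> borel_measurable (MG (m - 1) (m - 1) \<Otimes>\<^sub>M borel)"
    using i by (intro XB_MG) auto
  show "phiB i m \<in> borel_measurable (MG (m - 1) (m - 1) \<Otimes>\<^sub>M borel)"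
    unfolding phiB_def by measurable
  show "(\<lambda>\<omega>. \<Sum>k\<in>{1..<m}. phiB i k (\<omega>, U k \<omega>)) \<in> borel_measurable (MG (m - 1) (m - 1))"
  proof (intro borel_measurable_sum)
    fix k assume k: "k \<in> {1..<m}"
    have [measurable]: "rhoB i k \<in> borel_measurable (MG (m - 1) (m - 1))" using i k by (intro rhoB_MG) auto
    have [measurable]: "(\<lambda>\<omega>. XB i k \<omega> (U k \<omega>)) \<in> borel_measurable (MG (m - 1) (m - 1))"
      using i k by (intro XB_U_MG) auto
    have eq: "(\<lambda>\<omega>. phiB i k (\<omega>, U k \<omega>)) = (\<lambda>\<omega>. (1 - exp (- 1)) * rhoB i k \<omega> - XB i k \<omega> (U k \<omega>))"
      by (simp add: phiB_def fun_eq_iff)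
    show "(\<lambda>\<omega>. phiB i k (\<omega>, U k \<omega>)) \<in> borel_measurable (MG (m - 1) (m - 1))"
      unfolding eq by measurable
  qed
  fix \<omega> assume \<omega>: "\<omega> \<in> space M"
  interpret D: urn_det d "\<lambda>j. Y0 j \<omega>" "\<lambda>n. U n \<omega>" "\<lambda>n i. T n i \<omega>" using det[OF \<omega>] .
  define c where "c = 1 - exp (- 1::real)"
  have c: "0 < c" by (simp add: c_def)
  define \<rho> where "\<rho> = rhoB i m \<omega>"
  let ?Y = "Yf d (\<lambda>j. Y0 j \<omega>) (\<lambda>n. U n \<omega>) (\<lambda>n i. T n i \<omega>) (m - 1)"
  define a where "a = (\<Sum>l<i. ?Y l) / (\<Sum>l<d. ?Y l)"
  define b where "b = (\<Sum>l<Suc i. ?Y l) / (\<Sum>l<d. ?Y l)"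
  have tp: "0 < (\<Sum>l<d. ?Y l)" using D.tot_pos .
  have ab: "0 \<le> a" "a \<le> b" "b \<le> 1"
  proof -
    show "0 \<le> a" unfolding a_def using tp D.Y_nn i by (intro divide_nonneg_pos sum_nonneg) auto
    show "a \<le> b" unfolding a_def b_def using tp D.cum_mono[of i "Suc i" "m - 1"] i by (intro divide_right_mono) auto
    show "b \<le> 1" unfolding b_def using tp D.cum_mono[of "Suc i" d "m - 1"] i by simp
  qed
  have ba: "b - a = \<rho>"
    unfolding a_def b_def \<rho>_def rhoB_def totw_def by (simp add: diff_divide_distrib[symmetric])
  have "distr M borel (U m) = distr M lborel (U m)" by (rule distr_cong) auto
  also have "\<dots> = uniform_measure lborel {0..1}" using Udist[OF m] .
  finally have dU: "distr M borel (U m) = uniform_measure lborel {0..1}" .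
  have g: "\<And>u. ennreal (exp (phiB i m (\<omega>, u))) = ennreal (exp (c * \<rho> - 1)) * indicator {a<..b} u + ennreal (exp (c * \<rho>)) * indicator (- {a<..b}) u"
    by (auto simp: phiB_def XB_def urn_X_def a_def b_def c_def \<rho>_def split: split_indicator)
  have "(\<integral>\<^sup>+u. ennreal (exp (phiB i m (\<omega>, u))) \<partial>distr M borel (U m))
      = ennreal (exp (c * \<rho> - 1) * (b - a) + exp (c * \<rho>) * (1 - (b - a)))"
    unfolding dU g by (rule unif_calc[OF ab]) auto
  also have "\<dots> \<le> 1"
  proof -
    have e1: "exp (c * \<rho> - 1) = exp (c * \<rho>) * exp (- 1)"
      by (simp add: exp_diff exp_minus divide_inverse)
    have "exp (c * \<rho> - 1) * (b - a) + exp (c * \<rho>) * (1 - (b - a)) = exp (c * \<rho>) * (1 - c * \<rho>)"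
      unfolding ba e1 by (simp add: c_def algebra_simps)
    also have "\<dots> \<le> exp (c * \<rho>) * exp (- (c * \<rho>))"
      using exp_ge_add_one_self[of "- (c * \<rho>)"] by (intro mult_left_mono) auto
    also have "\<dots> = 1" by (simp add: exp_minus)
    finally show ?thesis by simp
  qed
  finally show "(\<integral>\<^sup>+u. ennreal (exp (phiB i m (\<omega>, u))) \<partial>distr M borel (U m)) \<le> 1" .
qed


lemma AB_M: "i < d \<Longrightarrow> AB i m \<in> borel_measurable M"
proof (cases "m = 0")
  case True then show ?thesis by (simp add: AB_def[abs_def])
next
  case False
  assume i: "i < d"
  have "(\<lambda>\<omega>. XB i m \<omega> (U m \<omega>)) \<in> borel_measurable M"
    by (rule measurable_sub[OF MG_sets MG_space XB_U_MG[of i m m m]]) (use i False in auto)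
  then show ?thesis using False by (simp add: AB_def[abs_def])
qed

lemma rhoB_M: "i < d \<Longrightarrow> rhoB i m \<in> borel_measurable M"
  by (rule measurable_sub[OF MG_sets MG_space rhoB_MG[of i m "m - 1" "m - 1"]]) auto

lemma partB_AE:
  assumes i: "i < d"
  shows "AE \<omega> in M. (\<forall>R. \<exists>n. R \<le> (\<Sum>k\<in>{1..n}. rhoB i k \<omega>)) \<longrightarrow> (\<forall>K. \<exists>n. K < (\<Sum>k\<in>{1..n}. AB i k \<omega>))"
proof (rule sum_diverge[OF PS AB_M[OF i] rhoB_M[OF i]])
  fix m \<omega> assume \<omega>: "\<omega> \<in> space M"
  interpret D: urn_det d "\<lambda>j. Y0 j \<omega>" "\<lambda>n. U n \<omega>" "\<lambda>n i. T n i \<omega>" using det[OF \<omega>] .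
  show "0 \<le> rhoB i m \<omega>" unfolding rhoB_def totw_def using D.Y_nn[OF i] D.tot_pos[of "m - 1"]
    by (intro divide_nonneg_pos) auto
next
  show "0 < 1 - exp (- 1::real)" by simp
next
  fix n
  have "(\<integral>\<^sup>+\<omega>. ennreal (exp (\<Sum>k\<in>{1..n}. (1 - exp (- 1)) * rhoB i k \<omega> - AB i k \<omega>)) \<partial>M)
      = (\<integral>\<^sup>+\<omega>. ennreal (exp (\<Sum>m\<in>{1..n}. phiB i m (\<omega>, U m \<omega>))) \<partial>M)"
  proof (intro nn_integral_cong arg_cong[where f = "\<lambda>x. ennreal (exp x)"] sum.cong refl)
    fix \<omega> k assume "k \<in> {1..n}"
    then show "(1 - exp (- 1)) * rhoB i k \<omega> - AB i k \<omega> = phiB i k (\<omega>, U k \<omega>)"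
      by (simp add: phiB_def AB_def)
  qed
  also have "\<dots> \<le> 1" by (rule partB_exp[OF i])
  finally show "(\<integral>\<^sup>+\<omega>. ennreal (exp (\<Sum>k\<in>{1..n}. (1 - exp (- 1)) * rhoB i k \<omega> - AB i k \<omega>)) \<partial>M) \<le> 1" .
qed

lemma AB_sum: "(\<Sum>k\<in>{1..n}. AB i k \<omega>) = Nw n i \<omega> - 1"
proof (induction n)
  case 0 then show ?case by (simp add: Nf_0)
next
  case (Suc n)
  have "AB i (Suc n) \<omega> = Xw n i \<omega>" by (simp add: AB_def XB_def)
  then show ?case using Suc by (simp add: Nf_Suc)
qed

end


lemma harm_div:
  fixes f :: "nat \<Rightarrow> real"
  assumes \<delta>: "0 < \<delta>" and C: "0 < C" and f: "\<And>k. K \<le> k \<Longrightarrow> \<delta> / (C + real k) \<le> f k"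
  shows "\<not> summable f"
proof
  assume sf: "summable f"
  define m where "m = max 1 (C + real K)"
  have m: "1 \<le> m" "C + real K \<le> m" by (auto simp: m_def)
  define g where "g k = \<delta> / (C + real (k + K))" for k
  have g0: "0 \<le> g k" for k using \<delta> C by (simp add: g_def)
  have "summable (\<lambda>k. f (k + K))" using sf by simp
  then have sg: "summable g"
  proof (rule summable_comparison_test'[where N = 0])
    fix k :: nat
    have "norm (g k) = g k" using g0[of k] by simp
    also have "g k \<le> f (k + K)" unfolding g_def using f[of "k + K"] by simp
    finally show "norm (g k) \<le> f (k + K)" .
  qed
  have "summable (\<lambda>k. inverse (real (Suc k)))"
  proof (rule summable_comparison_test'[where N = 0])
    show "summable (\<lambda>k. (m / \<delta>) * g k)" using sg by (rule summable_mult)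
    fix k :: nat
    have pos: "0 < C + real (k + K)" using C by simp
    have "C + real (k + K) \<le> m * (real k + 1)"
    proof -
      have "C + real (k + K) = (C + real K) + real k" by simp
      also have "\<dots> \<le> m + m * real k" using m by (intro add_mono) (auto intro: mult_right_mono[of 1 m "real k", simplified])
      finally show ?thesis by (simp add: algebra_simps)
    qed
    then have "1 / (real k + 1) \<le> m / (C + real (k + K))"
      using pos m by (simp add: field_simps)
    have e1: "norm (inverse (real (Suc k))) = 1 / (real k + 1)" by (simp add: divide_inverse)
    have e2: "(m / \<delta>) * g k = m / (C + real (k + K))" using \<delta> by (simp add: g_def)
    show "norm (inverse (real (Suc k))) \<le> (m / \<delta>) * g k"
      unfolding e1 e2 by fact
  qed
  then have "summable (\<lambda>k. inverse (real k) :: real)"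
    using summable_Suc_iff[where f = "\<lambda>k. inverse (real k) :: real"] by (simp only:)
  then show False using not_summable_harmonic[where 'a = real] by simp
qed

lemma unbounded_sum:
  fixes f :: "nat \<Rightarrow> real"
  assumes nn: "\<And>k. 0 \<le> f k" and ns: "\<not> summable f"
  shows "\<forall>R. \<exists>n. R \<le> (\<Sum>k\<in>{1..n}. f k)"
proof (rule ccontr)
  assume "\<not> ?thesis"
  then obtain R where R: "\<And>n. (\<Sum>k\<in>{1..n}. f k) < R" by (auto simp: not_le)
  have "summable f"
  proof (rule summableI_nonneg_bounded[OF nn])
    fix n
    have "(\<Sum>k<n. f k) \<le> (\<Sum>k\<in>{..n}. f k)" using nn by (intro sum_mono2) auto
    also have "{..n} = insert 0 {1..n}" by auto
    then have "(\<Sum>k\<in>{..n}. f k) = f 0 + (\<Sum>k\<in>{1..n}. f k)" by simp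
    finally show "(\<Sum>k<n. f k) \<le> f 0 + R" using R[of n] by linarith
  qed
  then show False using ns by simp
qed


context urn_det
begin

lemma Xs_sum_1: "0 < u (Suc n) \<Longrightarrow> u (Suc n) \<le> 1 \<Longrightarrow> (\<Sum>j<d. Xs n j) = 1"
proof -
  assume a: "0 < u (Suc n)" "u (Suc n) \<le> 1"
  obtain j where j: "j < d" "Xs n j = 1" using Xs_sum_eq1[OF a] by blast
  have "Xs n j \<le> (\<Sum>j<d. Xs n j)" using j Xs_nn by (intro member_le_sum) auto
  then show ?thesis using Xs_sum_le1[of n] j by linarith
qed

lemma sumN:
  assumes U01: "\<And>m. 1 \<le> m \<Longrightarrow> 0 < u m \<and> u m \<le> 1"
  shows "(\<Sum>j<d. N n j) = real d + real n"
proof (induction n)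
  case 0 then show ?case by (simp add: Nf_0)
next
  case (Suc n)
  have "(\<Sum>j<d. N (Suc n) j) = (\<Sum>j<d. N n j) + (\<Sum>j<d. Xs n j)" by (simp add: N_Suc sum.distrib)
  also have "(\<Sum>j<d. Xs n j) = 1" using U01[of "Suc n"] by (intro Xs_sum_1) auto
  finally show ?case using Suc by simp
qed

lemma combine:
  fixes p :: "nat \<Rightarrow> real" and i :: nat
  assumes i: "i < d"
    and p1: "\<And>j. j < d \<Longrightarrow> p j < 1"
    and U01: "\<And>m. 1 \<le> m \<Longrightarrow> 0 < u m \<and> u m \<le> 1"
    and A: "\<And>j. j < d \<Longrightarrow> (\<forall>B. \<exists>n. B < N n j) \<Longrightarrow> (\<lambda>n. S n j / N n j) \<longlonglongrightarrow> p j"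
    and B: "(\<forall>R. \<exists>n. R \<le> (\<Sum>k\<in>{1..n}. Y (k - 1) i / tot (k - 1))) \<longrightarrow> (\<forall>K. \<exists>n. K < N n i - 1)"
  shows "\<forall>B. \<exists>n. B < N n i"
proof (rule ccontr)
  assume "\<not> (\<forall>B. \<exists>n. B < N n i)"
  then obtain Bd where Bd: "\<And>n. N n i \<le> Bd" by (auto simp: not_less)
  have Bd1: "1 \<le> Bd" using Bd[of 0] N_ge1[OF i, of 0] by linarith
  obtain j where j: "j < d" "j \<noteq> i" "\<forall>B. \<exists>n. B < N n j"
  proof (rule ccontr)
    assume "\<not> thesis"
    then have "\<forall>j<d. \<exists>b. \<forall>n. N n j \<le> b"
      using Bd that by (metis not_less)
    then obtain f where f: "\<And>j n. j < d \<Longrightarrow> N n j \<le> f j" by metis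
    obtain n :: nat where n: "(\<Sum>j<d. f j) < real n" using reals_Archimedean2 by blast
    have "(\<Sum>j<d. N n j) \<le> (\<Sum>j<d. f j)" using f by (intro sum_mono) auto
    then show False using sumN[OF U01, of n] n by simp
  qed
  have inf0: "\<exists>m\<ge>n1. Xs m j = 1 \<and> t (Suc m) j = 0" for n1
  proof (rule ccontr)
    assume "\<not> ?thesis"
    then have ones: "\<And>m. n1 \<le> m \<Longrightarrow> Xs m j = 1 \<Longrightarrow> t (Suc m) j = 1" using t01[of _ j] j(1) by fastforce
    define D where "D = N n1 j - S n1 j"
    have Dn: "N n j - S n j = D" if "n1 \<le> n" for n
      using that
    proof (induction n)
      case 0 then show ?case by (simp add: D_def)
    next
      case (Suc n)
      show ?case
      proof (cases "n1 = Suc n")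
        case True then show ?thesis by (simp add: D_def)
      next
        case False
        then have "n1 \<le> n" using Suc.prems by simp
        moreover have e: "Xs n j - t (Suc n) j * Xs n j = 0" using ones[of n] \<open>n1 \<le> n\<close> Xs01[of n j] by auto
        moreover have "N (Suc n) j - S (Suc n) j = (N n j - S n j) + (Xs n j - t (Suc n) j * Xs n j)"
          by (simp add: N_Suc Sf_Suc algebra_simps)
        ultimately show ?thesis using Suc.IH by linarith
      qed
    qed
    have Ntop: "filterlim (\<lambda>n. N n j) at_top sequentially"
      unfolding filterlim_at_top eventually_sequentially
    proof
      fix Z
      obtain n0 where "Z < N n0 j" using j(3) by blast
      then show "\<exists>N0. \<forall>n\<ge>N0. Z \<le> N n j" using N_mono[of n0 _ j] by (intro exI[of _ n0]) force
    qed
    have "(\<lambda>n. 1 - D / N n j) \<longlonglongrightarrow> 1 - 0"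
      by (intro tendsto_diff tendsto_const tendsto_divide_0[OF tendsto_const] filterlim_at_top_imp_at_infinity[OF Ntop])
    moreover have "eventually (\<lambda>n. 1 - D / N n j = S n j / N n j) sequentially"
      unfolding eventually_sequentially
    proof (intro exI allI impI)
      fix n assume "n1 \<le> n"
      then have "N n j - S n j = D" by (rule Dn)
      moreover have "0 < N n j" using N_ge1[OF j(1), of n] by linarith
      ultimately show "1 - D / N n j = S n j / N n j" by (simp add: field_simps)
    qed
    ultimately have "(\<lambda>n. S n j / N n j) \<longlonglongrightarrow> 1" by (simp add: Lim_transform_eventually)
    moreover have "(\<lambda>n. S n j / N n j) \<longlonglongrightarrow> p j" using A[OF j(1) j(3)] .
    ultimately have "p j = 1" using LIMSEQ_unique by blast
    then show False using p1[OF j(1)] by simp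
  qed
  obtain m where m: "Xs m j = 1" "t (Suc m) j = 0" using inf0[of 0] by blast
  define \<delta> where "\<delta> = (1 / Bd) / (real d - 1)"
  have dpos: "0 < real d - 1" using d2 by simp
  have \<delta>pos: "0 < \<delta>" unfolding \<delta>_def using Bd1 dpos by simp
  have "\<delta> \<le> Y (Suc m) i"
  proof -
    have "1 / Bd \<le> 1 / N m i" using Bd[of m] N_ge1[OF i, of m] by (intro divide_left_mono) auto
    also have "\<dots> \<le> S m i / N m i" by (rule Pi_ge[OF i])
    finally have "\<delta> \<le> (S m i / N m i) / (real d - 1)" unfolding \<delta>_def using dpos by (intro divide_right_mono) auto
    also have "\<dots> \<le> Y m i + (S m i / N m i) / (real d - 1)" using Y_nn[OF i, of m] by simp
    also have "\<dots> \<le> Y (Suc m) i" using Y_incr[OF i j(1) j(2)[symmetric] m] .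
    finally show ?thesis .
  qed
  then have Yd: "\<And>n. Suc m \<le> n \<Longrightarrow> \<delta> \<le> Y n i" using Y_mono[OF i] order_trans by blast
  define f where "f k = Y (k - 1) i / tot (k - 1)" for k
  have fnn: "0 \<le> f k" for k unfolding f_def using Y_nn[OF i] tot_pos[of "k - 1"] by (intro divide_nonneg_pos) auto
  have "\<not> summable f"
  proof (rule harm_div[OF \<delta>pos tot0_pos, where K = "Suc (Suc m)"])
    fix k assume k: "Suc (Suc m) \<le> k"
    have tle: "tot (k - 1) \<le> tot 0 + real k" using tot_le[of "k - 1"] k by (simp add: of_nat_diff)
    have "\<delta> / (tot 0 + real k) \<le> \<delta> / tot (k - 1)"
      using tle tot_pos[of "k - 1"] \<delta>pos by (intro divide_left_mono) auto
    also have "\<dots> \<le> f k" unfolding f_def using Yd[of "k - 1"] k tot_pos[of "k - 1"] by (intro divide_right_mono) auto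
    finally show "\<delta> / (tot 0 + real k) \<le> f k" .
  qed
  then have "\<forall>R. \<exists>n. R \<le> (\<Sum>k\<in>{1..n}. f k)" by (rule unbounded_sum[OF fnn])
  then have "\<forall>K. \<exists>n. K < N n i - 1" using B unfolding f_def by blast
  then obtain n where "Bd < N n i - 1" by blast
  then show False using Bd[of n] by linarith
qed

end


context urn_prob
begin

lemma U01_AE: "AE \<omega> in M. \<forall>m. 1 \<le> m \<longrightarrow> 0 < U m \<omega> \<and> U m \<omega> \<le> 1"
proof (subst AE_all_countable, intro allI)
  fix m :: nat
  interpret prob_space M by (rule PS)
  show "AE \<omega> in M. 1 \<le> m \<longrightarrow> 0 < U m \<omega> \<and> U m \<omega> \<le> 1"
  proof (cases "1 \<le> m")
    case False then show ?thesis by simp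
  next
    case True
    have "measurable M lborel = measurable M borel" by (rule measurable_cong_sets) auto
    then have Ul: "U m \<in> measurable M lborel" using Um[OF True] by simp
    have s1: "{0<..1::real} \<in> sets lborel" by simp
    have e1: "emeasure lborel {0<..1::real} = 1" by simp
    have e2: "emeasure lborel {0..1::real} = 1" by simp
    have e3: "{0..1::real} \<inter> {0<..1} = {0<..1}" by auto
    have "emeasure M (U m -` {0<..1} \<inter> space M) = emeasure (distr M lborel (U m)) {0<..1}"
      by (rule emeasure_distr[OF Ul s1, symmetric])
    also have "\<dots> = emeasure (uniform_measure lborel {0..1::real}) {0<..1}" by (simp only: Udist[OF True])
    also have "\<dots> = emeasure lborel ({0..1::real} \<inter> {0<..1}) / emeasure lborel {0..1::real}"
      by (rule emeasure_uniform_measure) simp_all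
    also have "\<dots> = 1 / 1" by (simp only: e1 e2 e3)
    also have "(1::ennreal) / 1 = 1" using mult_divide_eq_ennreal[of 1 1] by simp
    finally have "emeasure M (U m -` {0<..1} \<inter> space M) = 1" .
    then have "prob (U m -` {0<..1} \<inter> space M) = 1" by (simp add: emeasure_eq_measure)
    then have "AE \<omega> in M. \<omega> \<in> U m -` {0<..1} \<inter> space M" by (rule AE_prob_1)
    then show ?thesis by (rule AE_mp) (auto intro!: AE_I2)
  qed
qed

lemma main:
  "AE \<omega> in M.
     (\<forall>i<d. (\<lambda>n. urn_Pi d (\<lambda>j. Y0 j \<omega>) (\<lambda>n. U n \<omega>) (\<lambda>n i. T n i \<omega>) n i) \<longlonglongrightarrow> p i)
   \<and> (\<forall>i<d. \<forall>j<d. (\<lambda>n. urn_Hmat d p (urn_Pi d (\<lambda>j. Y0 j \<omega>) (\<lambda>n. U n \<omega>) (\<lambda>n i. T n i \<omega>) n) i j)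
        \<longlonglongrightarrow> urn_Hmat d p p i j)"
proof -
  have AEA: "AE \<omega> in M. \<forall>i. i < d \<longrightarrow> (\<forall>r::nat. eventually (\<lambda>k. \<omega> \<in> space M - Aev i (1 / (real r + 1)) k) sequentially)"
    by (subst AE_all_countable) (intro allI AE_impI partA_AE)
  have AEB: "AE \<omega> in M. \<forall>i. i < d \<longrightarrow> ((\<forall>R. \<exists>n. R \<le> (\<Sum>k\<in>{1..n}. rhoB i k \<omega>)) \<longrightarrow> (\<forall>K. \<exists>n. K < (\<Sum>k\<in>{1..n}. AB i k \<omega>)))"
    by (subst AE_all_countable) (intro allI AE_impI partB_AE)
  show ?thesis
    using AEA AEB U01_AE AE_space
  proof eventually_elim
    case (elim \<omega>)
    note \<omega> = elim(4)
    interpret D: urn_det d "\<lambda>j. Y0 j \<omega>" "\<lambda>n. U n \<omega>" "\<lambda>n i. T n i \<omega>" using det[OF \<omega>] .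
    have conv: "(\<lambda>n. Sw n i \<omega> / Nw n i \<omega>) \<longlonglongrightarrow> p i" if i: "i < d" for i
    proof -
      have unb: "\<forall>B. \<exists>n. B < Nw n i \<omega>"
      proof (rule D.combine[OF i, where p = p])
        show "\<And>j. j < d \<Longrightarrow> p j < 1" using p01 by auto
        show "\<And>m. 1 \<le> m \<Longrightarrow> 0 < U m \<omega> \<and> U m \<omega> \<le> 1" using elim(3) by auto
        show "\<And>j. j < d \<Longrightarrow> (\<forall>B. \<exists>n. B < Nw n j \<omega>) \<Longrightarrow> (\<lambda>n. Sw n j \<omega> / Nw n j \<omega>) \<longlonglongrightarrow> p j"
          using partA_det[OF \<omega>] elim(1) by blast
        have eq1: "(\<Sum>k\<in>{1..n}. Yw (k - 1) i \<omega> / D.tot (k - 1)) = (\<Sum>k\<in>{1..n}. rhoB i k \<omega>)" for n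
          by (simp add: rhoB_def totw_def)
        have eq2: "(\<Sum>k\<in>{1..n}. AB i k \<omega>) = Nw n i \<omega> - 1" for n by (rule AB_sum)
        have h: "(\<forall>R. \<exists>n. R \<le> (\<Sum>k\<in>{1..n}. rhoB i k \<omega>)) \<longrightarrow> (\<forall>K. \<exists>n. K < (\<Sum>k\<in>{1..n}. AB i k \<omega>))"
          using elim(2) i by blast
        show "(\<forall>R. \<exists>n. R \<le> (\<Sum>k\<in>{1..n}. Yw (k - 1) i \<omega> / D.tot (k - 1))) \<longrightarrow> (\<forall>K. \<exists>n. K < Nw n i \<omega> - 1)"
          using h unfolding eq1 eq2 .
      qed
      show ?thesis using partA_det[OF \<omega> i unb] elim(1) i by blast
    qed
    have convPi: "(\<lambda>n. urn_Pi d (\<lambda>j. Y0 j \<omega>) (\<lambda>n. U n \<omega>) (\<lambda>n i. T n i \<omega>) n i) \<longlonglongrightarrow> p i" if "i < d" for i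
      using conv[OF that] by (simp add: urn_Pi_eq)
    show ?case
    proof (intro conjI allI impI)
      fix i assume "i < d" then show "(\<lambda>n. urn_Pi d (\<lambda>j. Y0 j \<omega>) (\<lambda>n. U n \<omega>) (\<lambda>n i. T n i \<omega>) n i) \<longlonglongrightarrow> p i"
        by (rule convPi)
    next
      fix i j assume ij: "i < d" "j < d"
      show "(\<lambda>n. urn_Hmat d p (urn_Pi d (\<lambda>j. Y0 j \<omega>) (\<lambda>n. U n \<omega>) (\<lambda>n i. T n i \<omega>) n) i j) \<longlonglongrightarrow> urn_Hmat d p p i j"
      proof (cases "i = j")
        case True then show ?thesis by (simp add: urn_Hmat_def)
      next
        case False
        have den: "(\<Sum>k\<in>{0..<d} - {j}. p k) \<noteq> 0"
        proof -
          have "0 < (\<Sum>k\<in>{0..<d} - {j}. p k)" using p01 ij False by (intro sum_pos2[of _ i]) (auto intro: less_imp_le)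
          then show ?thesis by simp
        qed
        have "(\<lambda>n. urn_Pi d (\<lambda>j. Y0 j \<omega>) (\<lambda>n. U n \<omega>) (\<lambda>n i. T n i \<omega>) n i * (1 - p j) /
               (\<Sum>k\<in>{0..<d} - {j}. urn_Pi d (\<lambda>j. Y0 j \<omega>) (\<lambda>n. U n \<omega>) (\<lambda>n i. T n i \<omega>) n k))
              \<longlonglongrightarrow> p i * (1 - p j) / (\<Sum>k\<in>{0..<d} - {j}. p k)"
          using ij by (intro tendsto_divide tendsto_mult tendsto_const tendsto_sum convPi den) auto
        then show ?thesis using False by (simp add: urn_Hmat_def)
      qed
    qed
  qed
qed

end

theorem lemma2:
  fixes M :: "'a measure" and d :: nat and p :: "nat \<Rightarrow> real"
    and Y0 :: "nat \<Rightarrow> 'a \<Rightarrow> real" and U :: "nat \<Rightarrow> 'a \<Rightarrow> real"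
    and T :: "nat \<Rightarrow> nat \<Rightarrow> 'a \<Rightarrow> real"
  assumes "prob_space M"
    and "d \<ge> 2"
    and "\<And>i. i < d \<Longrightarrow> 0 < p i \<and> p i < 1"
    and "\<And>j. j < d \<Longrightarrow> Y0 j \<in> borel_measurable M"
    and "\<And>\<omega>. \<omega> \<in> space M \<Longrightarrow> (\<forall>j<d. 0 \<le> Y0 j \<omega>) \<and> (\<exists>j<d. Y0 j \<omega> \<noteq> 0)"
    and "\<And>n. n \<ge> 1 \<Longrightarrow> U n \<in> borel_measurable M"
    and "\<And>n. n \<ge> 1 \<Longrightarrow> distr M lborel (U n) = uniform_measure lborel {0..1}"
    and "\<And>n i. n \<ge> 1 \<Longrightarrow> i < d \<Longrightarrow> T n i \<in> borel_measurable M"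
    and "\<And>n i \<omega>. n \<ge> 1 \<Longrightarrow> i < d \<Longrightarrow> \<omega> \<in> space M \<Longrightarrow> T n i \<omega> \<in> {0, 1}"
    and "\<And>n i. n \<ge> 1 \<Longrightarrow> i < d \<Longrightarrow> measure M {\<omega> \<in> space M. T n i \<omega> = 1} = p i"
    and "prob_space.indep_sets M
           (\<lambda>k. case k of
                   IY \<Rightarrow> gen_sigma M {Y0 j | j. j < d}
                 | IU n \<Rightarrow> gen_sigma M {U n}
                 | IT n i \<Rightarrow> gen_sigma M {T n i})
           ({IY} \<union> {IU n | n. n \<ge> 1} \<union> {IT n i | n i. n \<ge> 1 \<and> i < d})"
  shows "AE \<omega> in M.
           (\<forall>i<d. (\<lambda>n. urn_Pi d (\<lambda>j. Y0 j \<omega>) (\<lambda>n. U n \<omega>) (\<lambda>n i. T n i \<omega>) n i)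
                     \<longlonglongrightarrow> p i)
         \<and> (\<forall>i<d. \<forall>j<d.
              (\<lambda>n. urn_Hmat d p (urn_Pi d (\<lambda>j. Y0 j \<omega>) (\<lambda>n. U n \<omega>) (\<lambda>n i. T n i \<omega>) n) i j)
                \<longlonglongrightarrow> urn_Hmat d p p i j)"
proof -
  interpret urn_prob M d p Y0 U T using assms by (rule urn_prob.intro)
  show ?thesis by (rule main)
qed


end
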